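(* On the 3-torus $P=\mathbb T^3=(\mathbb R/2\pi\mathbb Z)^3$ with coordinates $x,y,z$, the 1-form $\theta=\cos z\,dx+\sin z\,dy$ is a contact form (not regular), and the Lie algebra $\mathfrak X_{\mathrm{ex}}(P,\theta)$ of exact strict contact vector fields has codimension two in the Lie algebra $\mathfrak X(P,\theta)$ of strict contact vector fields. More precisely, $\mathfrak X(P,\theta)=\mathrm{Span}\{\partial_x,\partial_y\}\ltimes\mathfrak X_{\mathrm{ex}}(P,\theta)$, and the image of the flux map $X\mapsto[i_X\mu]$ restricted to $\mathfrak X(P,\theta)$ is the 2-dimensional subspace of $H^2(P,\mathbb R)$ spanned by $[dy\wedge dz]$ and $[dx\wedge dz]$.
   Context: $\mu=\frac12\theta\wedge d\theta$. $\mathfrak X(P,\theta)=\{X: L_X\theta=0\}$ and $\mathfrak X_{\mathrm{ex}}(P,\theta)=\{X\in\mathfrak X(P,\theta): i_X\mu\text{ is exact}\}$. *)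

theory Defs
  imports "HOL-Analysis.Analysis"
begin

text \<open>The 3-torus is modelled as R^3 modulo (2 pi Z)^3: smooth objects on the torus are
smooth functions on R^3 that are 2pi-periodic in each coordinate. Coordinates: x = p$1,
y = p$2, z = p$3 (indices of type 3).\<close>

definition pd :: "3 \<Rightarrow> (real^3 \<Rightarrow> real) \<Rightarrow> real^3 \<Rightarrow> real" where
  "pd i f p = frechet_derivative f (at p) (axis i 1)"

fun smooth_k :: "nat \<Rightarrow> (real^3 \<Rightarrow> real) \<Rightarrow> bool" where
  "smooth_k 0 f = continuous_on UNIV f"
| "smooth_k (Suc n) f = ((\<forall>p. f differentiable (at p)) \<and> (\<forall>i. smooth_k n (pd i f)))"

definition smooth3 :: "(real^3 \<Rightarrow> real) \<Rightarrow> bool" where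
  "smooth3 f = (\<forall>n. smooth_k n f)"

definition periodic3 :: "(real^3 \<Rightarrow> real) \<Rightarrow> bool" where
  "periodic3 f = (\<forall>p i. f (p + axis i (2*pi)) = f p)"

definition tfun :: "(real^3 \<Rightarrow> real) \<Rightarrow> bool" where
  "tfun f = (smooth3 f \<and> periodic3 f)"

text \<open>vector fields and 1-forms: component functions (coefficients of d/dx_i resp. dx_i)\<close>
definition tvec :: "(real^3 \<Rightarrow> real^3) \<Rightarrow> bool" where
  "tvec V = (\<forall>i. tfun (\<lambda>p. V p $ i))"

text \<open>2-forms: omega = sum_{i<j} omega_ij dx_i wedge dx_j, stored as antisymmetric matrices\<close>
definition t2form :: "(real^3 \<Rightarrow> real^3^3) \<Rightarrow> bool" where
  "t2form w = ((\<forall>i j. tfun (\<lambda>p. w p $ i $ j)) \<and> (\<forall>p i j. w p $ i $ j = - w p $ j $ i))"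

definition d1 :: "(real^3 \<Rightarrow> real^3) \<Rightarrow> real^3 \<Rightarrow> real^3^3" where
  "d1 a p = (\<chi> i j. pd i (\<lambda>q. a q $ j) p - pd j (\<lambda>q. a q $ i) p)"

text \<open>wedge of a 1-form and a 2-form; result = coefficient of dx wedge dy wedge dz\<close>
definition wedge12 :: "(real^3 \<Rightarrow> real^3) \<Rightarrow> (real^3 \<Rightarrow> real^3^3) \<Rightarrow> real^3 \<Rightarrow> real" where
  "wedge12 a b p = a p $ 1 * b p $ 2 $ 3 - a p $ 2 * b p $ 1 $ 3 + a p $ 3 * b p $ 1 $ 2"

definition mu :: "(real^3 \<Rightarrow> real^3) \<Rightarrow> real^3 \<Rightarrow> real" where
  "mu th p = (1/2) * wedge12 th (d1 th) p"

definition interior3 :: "(real^3 \<Rightarrow> real^3) \<Rightarrow> (real^3 \<Rightarrow> real) \<Rightarrow> real^3 \<Rightarrow> real^3^3" where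
  "interior3 X f p = (\<chi> i j. f p * det (\<chi> r. if r = 1 then X p else if r = 2 then axis i 1 else axis j 1))"

definition lie1 :: "(real^3 \<Rightarrow> real^3) \<Rightarrow> (real^3 \<Rightarrow> real^3) \<Rightarrow> real^3 \<Rightarrow> real^3" where
  "lie1 X a p = (\<chi> j. \<Sum>i\<in>UNIV. X p $ i * pd i (\<lambda>q. a q $ j) p + a p $ i * pd j (\<lambda>q. X q $ i) p)"

definition lie_bracket :: "(real^3 \<Rightarrow> real^3) \<Rightarrow> (real^3 \<Rightarrow> real^3) \<Rightarrow> real^3 \<Rightarrow> real^3" where
  "lie_bracket X Y p = (\<chi> i. \<Sum>j\<in>UNIV. X p $ j * pd j (\<lambda>q. Y q $ i) p - Y p $ j * pd j (\<lambda>q. X q $ i) p)"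

definition exact2 :: "(real^3 \<Rightarrow> real^3^3) \<Rightarrow> bool" where
  "exact2 w = (\<exists>a. tvec a \<and> d1 a = w)"

definition strict_contact :: "(real^3 \<Rightarrow> real^3) \<Rightarrow> (real^3 \<Rightarrow> real^3) set" where
  "strict_contact th = {X. tvec X \<and> lie1 X th = (\<lambda>p. 0)}"

definition exact_strict_contact :: "(real^3 \<Rightarrow> real^3) \<Rightarrow> (real^3 \<Rightarrow> real^3) set" where
  "exact_strict_contact th = {X \<in> strict_contact th. exact2 (interior3 X (mu th))}"

definition contact_form :: "(real^3 \<Rightarrow> real^3) \<Rightarrow> bool" where
  "contact_form th = (tvec th \<and> (\<forall>p. wedge12 th (d1 th) p \<noteq> 0))"

definition reeb :: "(real^3 \<Rightarrow> real^3) \<Rightarrow> (real^3 \<Rightarrow> real^3) \<Rightarrow> bool" where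
  "reeb th R = (tvec R \<and> (\<forall>p. th p \<bullet> R p = 1 \<and> (\<forall>j. (\<Sum>i\<in>UNIV. R p $ i * d1 th p $ i $ j) = 0)))"

definition teq :: "real^3 \<Rightarrow> real^3 \<Rightarrow> bool" where
  "teq p q = (\<forall>i. \<exists>k::int. p $ i - q $ i = 2 * pi * k)"

text \<open>regular contact form: the Reeb flow is periodic with a common minimal period T > 0
  at every point, i.e. it generates a free S^1-action\<close>
definition regular :: "(real^3 \<Rightarrow> real^3) \<Rightarrow> bool" where
  "regular th = (\<exists>R T. reeb th R \<and> T > 0 \<and>
     (\<forall>\<gamma>. (\<forall>t. (\<gamma> has_vector_derivative R (\<gamma> t)) (at t)) \<longrightarrow>
        (\<forall>t. teq (\<gamma> (t + T)) (\<gamma> t) \<and> (\<forall>s. 0 < s \<and> s < T \<longrightarrow> \<not> teq (\<gamma> (t + s)) (\<gamma> t)))))"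

definition basic2 :: "3 \<Rightarrow> 3 \<Rightarrow> real^3 \<Rightarrow> real^3^3" where
  "basic2 k l p = (\<chi> i j. if i = k \<and> j = l then 1 else if i = l \<and> j = k then -1 else 0)"

definition theta0 :: "real^3 \<Rightarrow> real^3" where
  "theta0 p = (\<chi> i. if i = 1 then cos (p $ 3) else if i = 2 then sin (p $ 3) else 0)"

definition dX :: "real^3 \<Rightarrow> real^3" where "dX p = axis 1 1"
definition dY :: "real^3 \<Rightarrow> real^3" where "dY p = axis 2 1"

end

theory Submission
  imports Defs
begin


lemma cases3: fixes i :: 3 obtains "i = 1" | "i = 2" | "i = 3"
  using exhaust_3 by blast

lemma pd_eq: "(f has_derivative f') (at p) \<Longrightarrow> pd i f p = f' (axis i 1)"
  unfolding pd_def by (metis frechet_derivative_at)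

lemma pd_works: "f differentiable (at p) \<Longrightarrow> (f has_derivative (\<lambda>h. \<Sum>i\<in>UNIV. h $ i * pd i f p)) (at p)"
proof -
  assume "f differentiable (at p)"
  then have D: "(f has_derivative frechet_derivative f (at p)) (at p)" using frechet_derivative_works by blast
  then have lin: "linear (frechet_derivative f (at p))" using has_derivative_linear by blast
  have eq: "frechet_derivative f (at p) h = (\<Sum>i\<in>UNIV. h $ i * pd i f p)" for h
  proof -
    have "h = (\<Sum>i\<in>UNIV. h $ i *\<^sub>R axis i 1)"
      by (simp add: vec_eq_iff sum_3 axis_def forall_3)
    then have "frechet_derivative f (at p) h = frechet_derivative f (at p) (\<Sum>i\<in>UNIV. h $ i *\<^sub>R axis i 1)" by simp
    also have "\<dots> = (\<Sum>i\<in>UNIV. h $ i * frechet_derivative f (at p) (axis i 1))"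
      using lin by (simp add: linear_sum linear_scale)
    finally show ?thesis by (simp add: pd_def)
  qed
  have "frechet_derivative f (at p) = (\<lambda>h. \<Sum>i\<in>UNIV. h $ i * pd i f p)" using eq by (rule ext)
  then show ?thesis using D by simp
qed

lemma diff_cont: "(\<And>p. f differentiable (at p)) \<Longrightarrow> continuous_on UNIV f"
  by (meson continuous_at_imp_continuous_on differentiable_imp_continuous_within)

lemma smooth3_D: "smooth3 f \<Longrightarrow> f differentiable (at p)"
  unfolding smooth3_def by (metis smooth_k.simps(2))

lemma smooth3_pd: "smooth3 f \<Longrightarrow> smooth3 (pd i f)"
  unfolding smooth3_def by (metis smooth_k.simps(2))

lemma smooth3_cont: "smooth3 f \<Longrightarrow> continuous_on UNIV f"
  unfolding smooth3_def by (metis smooth_k.simps(1))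

lemma smooth3_isCont: "smooth3 f \<Longrightarrow> isCont f p"
  using smooth3_cont continuous_on_eq_continuous_at by blast

lemma smooth_class:
  assumes "\<And>f p. P f \<Longrightarrow> f differentiable (at p)" "\<And>f i. P f \<Longrightarrow> P (pd i f)" "P f"
  shows "smooth3 f"
proof -
  have "\<forall>f. P f \<longrightarrow> smooth_k n f" for n
  proof (induction n)
    case 0 then show ?case using assms(1) diff_cont by (metis smooth_k.simps(1))
  next
    case (Suc n) then show ?case using assms(1,2) by auto
  qed
  then show ?thesis using assms(3) smooth3_def by blast
qed

lemma smooth3_intro: "(\<And>p. f differentiable (at p)) \<Longrightarrow> (\<And>i. smooth3 (pd i f)) \<Longrightarrow> smooth3 f"
  unfolding smooth3_def
proof
  fix n assume a: "\<And>p. f differentiable (at p)" "\<And>i. \<forall>n. smooth_k n (pd i f)"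
  show "smooth_k n f"
    by (cases n) (use a diff_cont in auto)
qed

lemma fd: "f differentiable (at p) \<Longrightarrow> (f has_derivative frechet_derivative f (at p)) (at p)"
  using frechet_derivative_works by blast

lemma pd_add: "f differentiable (at p) \<Longrightarrow> g differentiable (at p) \<Longrightarrow> pd i (\<lambda>q. f q + g q) p = pd i f p + pd i g p"
  by (subst pd_eq[OF has_derivative_add[OF fd fd]]) (auto simp: pd_def)

lemma pd_diff: "f differentiable (at p) \<Longrightarrow> g differentiable (at p) \<Longrightarrow> pd i (\<lambda>q. f q - g q) p = pd i f p - pd i g p"
  by (subst pd_eq[OF has_derivative_diff[OF fd fd]]) (auto simp: pd_def)

lemma pd_minus: "f differentiable (at p) \<Longrightarrow> pd i (\<lambda>q. - f q) p = - pd i f p"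
  by (subst pd_eq[OF has_derivative_minus[OF fd]]) (auto simp: pd_def)

lemma pd_mult: "f differentiable (at p) \<Longrightarrow> g differentiable (at p) \<Longrightarrow> pd i (\<lambda>q. f q * g q) p = pd i f p * g p + f p * pd i g p"
  by (subst pd_eq[OF has_derivative_mult[OF fd fd]]) (auto simp: pd_def)

lemma pd_const: "pd i (\<lambda>q. c) p = 0"
  by (subst pd_eq[OF has_derivative_const]) auto

lemma pd_cmult: "f differentiable (at p) \<Longrightarrow> pd i (\<lambda>q. c * f q) p = c * pd i f p"
  by (subst pd_eq[OF has_derivative_mult_right[OF fd]]) (auto simp: pd_def)

lemma has_derivative_coord: "((\<lambda>q::real^3. q $ k) has_derivative (\<lambda>h. h $ k)) F"
  by (rule bounded_linear_imp_has_derivative) (simp add: bounded_linear_vec_nth)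

lemma pd_coord: "pd i (\<lambda>q. q $ k) p = (if i = k then 1 else 0)"
  by (subst pd_eq[OF has_derivative_coord]) (auto simp: axis_def)

lemma diff_coord: "(\<lambda>q::real^3. q $ k) differentiable F"
  using has_derivative_coord differentiable_def by blast

lemma pd_cos3: "pd i (\<lambda>q. cos (q $ 3)) p = (if i = 3 then - sin (p $ 3) else 0)"
proof -
  have "((\<lambda>q. cos (q $ 3)) has_derivative (\<lambda>h. h $ 3 * - sin (p $ 3))) (at p)"
    by (auto intro!: derivative_eq_intros has_derivative_coord)
  from pd_eq[OF this, of i] show ?thesis by (auto simp: axis_def)
qed

lemma pd_sin3: "pd i (\<lambda>q. sin (q $ 3)) p = (if i = 3 then cos (p $ 3) else 0)"
proof -
  have "((\<lambda>q. sin (q $ 3)) has_derivative (\<lambda>h. h $ 3 * cos (p $ 3))) (at p)"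
    by (auto intro!: derivative_eq_intros has_derivative_coord)
  from pd_eq[OF this, of i] show ?thesis by (auto simp: axis_def)
qed

lemma smooth_k_add: "smooth_k n f \<Longrightarrow> smooth_k n g \<Longrightarrow> smooth_k n (\<lambda>q. f q + g q)"
proof (induction n arbitrary: f g)
  case 0 then show ?case by (auto intro: continuous_on_add)
next
  case (Suc n)
  then have d: "\<And>p. f differentiable (at p)" "\<And>p. g differentiable (at p)" by auto
  then have "pd i (\<lambda>q. f q + g q) = (\<lambda>q. pd i f q + pd i g q)" for i by (auto simp: pd_add)
  with Suc d show ?case by (auto intro: differentiable_add)
qed

lemma smooth3_add: "smooth3 f \<Longrightarrow> smooth3 g \<Longrightarrow> smooth3 (\<lambda>q. f q + g q)"
  unfolding smooth3_def by (auto intro: smooth_k_add)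

lemma pd_add_f: "smooth3 f \<Longrightarrow> smooth3 g \<Longrightarrow> pd i (\<lambda>q. f q + g q) = (\<lambda>q. pd i f q + pd i g q)"
  by (auto simp: pd_add smooth3_D)
lemma pd_diff_f: "smooth3 f \<Longrightarrow> smooth3 g \<Longrightarrow> pd i (\<lambda>q. f q - g q) = (\<lambda>q. pd i f q - pd i g q)"
  by (auto simp: pd_diff smooth3_D)
lemma pd_mult_f: "smooth3 f \<Longrightarrow> smooth3 g \<Longrightarrow> pd i (\<lambda>q. f q * g q) = (\<lambda>q. pd i f q * g q + f q * pd i g q)"
  by (auto simp: pd_mult smooth3_D)
lemma pd_minus_f: "smooth3 f \<Longrightarrow> pd i (\<lambda>q. - f q) = (\<lambda>q. - pd i f q)"
  by (auto simp: pd_minus smooth3_D)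
lemma pd_cmult_f: "smooth3 f \<Longrightarrow> pd i (\<lambda>q. c * f q) = (\<lambda>q. c * pd i f q)"
  by (auto simp: pd_cmult smooth3_D)
lemma pd_const_f: "pd i (\<lambda>q. c) = (\<lambda>q. 0)"
  by (auto simp: pd_const)
lemma pd_coord_f: "pd i (\<lambda>q. q $ k) = (\<lambda>q. if i = k then 1 else 0)"
  by (auto simp: pd_coord)

lemma smooth3_const: "smooth3 (\<lambda>q. c)"
  by (rule smooth_class[where P="\<lambda>h. \<exists>c. h = (\<lambda>q. c)"]) (auto simp: pd_const_f)

lemma smooth3_coord: "smooth3 (\<lambda>q. q $ k)"
  by (rule smooth3_intro) (auto simp: pd_coord_f smooth3_const diff_coord)

lemma smooth3_mult: "smooth3 f \<Longrightarrow> smooth3 g \<Longrightarrow> smooth3 (\<lambda>q. f q * g q)"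
proof -
  have "\<forall>f g. smooth3 f \<longrightarrow> smooth3 g \<longrightarrow> smooth_k n (\<lambda>q. f q * g q)" for n
  proof (induction n)
    case 0 show ?case
    proof (intro allI impI)
      fix f g :: "real^3 \<Rightarrow> real" assume fg: "smooth3 f" "smooth3 g"
      show "smooth_k 0 (\<lambda>q. f q * g q)" using continuous_on_mult[OF smooth3_cont[OF fg(1)] smooth3_cont[OF fg(2)]] by simp
    qed
  next
    case (Suc n)
    show ?case
    proof (intro allI impI)
      fix f g :: "real^3 \<Rightarrow> real" assume fg: "smooth3 f" "smooth3 g"
      show "smooth_k (Suc n) (\<lambda>q. f q * g q)"
      proof -
        have "smooth_k n (pd i (\<lambda>q. f q * g q))" for i
        proof -
          have "smooth_k n (\<lambda>q. pd i f q * g q)" "smooth_k n (\<lambda>q. f q * pd i g q)"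
            using Suc fg smooth3_pd by blast+
          then show ?thesis by (simp add: pd_mult_f fg smooth_k_add)
        qed
        moreover have "(\<lambda>q. f q * g q) differentiable (at p)" for p
          using fg by (simp add: differentiable_mult smooth3_D)
        ultimately show ?thesis by simp
      qed
    qed
  qed
  then show "smooth3 f \<Longrightarrow> smooth3 g \<Longrightarrow> smooth3 (\<lambda>q. f q * g q)" unfolding smooth3_def by blast
qed

lemma smooth3_cmult: "smooth3 f \<Longrightarrow> smooth3 (\<lambda>q. c * f q)"
  using smooth3_mult[OF smooth3_const] by blast

lemma smooth3_minus: "smooth3 f \<Longrightarrow> smooth3 (\<lambda>q. - f q)"
  using smooth3_cmult[of f "-1"] by simp

lemma smooth3_diff: "smooth3 f \<Longrightarrow> smooth3 g \<Longrightarrow> smooth3 (\<lambda>q. f q - g q)"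
proof -
  assume "smooth3 f" "smooth3 g"
  then have "smooth3 (\<lambda>q. f q + - g q)" by (intro smooth3_add smooth3_minus)
  then show ?thesis by simp
qed

lemma smooth3_cs: "smooth3 (\<lambda>q. a * cos (q $ 3) + b * sin (q $ 3))"
proof (rule smooth_class[where P="\<lambda>h. \<exists>a b. h = (\<lambda>q. a * cos (q $ 3) + b * sin (q $ 3))"])
  fix h :: "real^3 \<Rightarrow> real" and i assume "\<exists>a b. h = (\<lambda>q. a * cos (q $ 3) + b * sin (q $ 3))"
  then obtain a b where h: "h = (\<lambda>q. a * cos (q $ 3) + b * sin (q $ 3))" by blast
  have "((\<lambda>q::real^3. cos (q $ 3)) has_derivative (\<lambda>h. h $ 3 * - sin (p $ 3))) (at p)" 
     "((\<lambda>q::real^3. sin (q $ 3)) has_derivative (\<lambda>h. h $ 3 * cos (p $ 3))) (at p)" for p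
    by (auto intro!: derivative_eq_intros has_derivative_coord)
  then have d: "(\<lambda>q::real^3. cos (q $ 3)) differentiable at p" "(\<lambda>q::real^3. sin (q $ 3)) differentiable at p" for p
    by (auto simp: differentiable_def)
  have "pd i h = (\<lambda>q. (if i = 3 then b else 0) * cos (q $ 3) + (if i = 3 then -a else 0) * sin (q $ 3))"
    unfolding h by (rule ext) (simp add: pd_add pd_cmult pd_cos3 pd_sin3 d differentiable_mult differentiable_const)
  then show "\<exists>a b. pd i h = (\<lambda>q. a * cos (q $ 3) + b * sin (q $ 3))" by blast
next
  fix h :: "real^3 \<Rightarrow> real" and p assume "\<exists>a b. h = (\<lambda>q. a * cos (q $ 3) + b * sin (q $ 3))"
  have "((\<lambda>q::real^3. cos (q $ 3)) has_derivative (\<lambda>h. h $ 3 * - sin (p $ 3))) (at p)" 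
     "((\<lambda>q::real^3. sin (q $ 3)) has_derivative (\<lambda>h. h $ 3 * cos (p $ 3))) (at p)"
    by (auto intro!: derivative_eq_intros has_derivative_coord)
  then have d: "(\<lambda>q::real^3. cos (q $ 3)) differentiable at p" "(\<lambda>q::real^3. sin (q $ 3)) differentiable at p"
    by (auto simp: differentiable_def)
  then show "h differentiable at p" using \<open>\<exists>a b. _\<close> by (auto intro!: differentiable_add differentiable_mult differentiable_const)
qed auto

lemma smooth3_cos3: "smooth3 (\<lambda>q. cos (q $ 3))" using smooth3_cs[of 1 0] by simp
lemma smooth3_sin3: "smooth3 (\<lambda>q. sin (q $ 3))" using smooth3_cs[of 0 1] by simp
lemma pd_cos3_f: "pd i (\<lambda>q. cos (q $ 3)) = (\<lambda>q. if i = 3 then - sin (q $ 3) else 0)"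
  by (auto simp: pd_cos3)
lemma pd_sin3_f: "pd i (\<lambda>q. sin (q $ 3)) = (\<lambda>q. if i = 3 then cos (q $ 3) else 0)"
  by (auto simp: pd_sin3)

definition updv :: "3 \<Rightarrow> real \<Rightarrow> real^3 \<Rightarrow> real^3" where
  "updv k c p = (\<chi> i. if i = k then c else p $ i)"

lemma updv_nth[simp]: "updv k c p $ i = (if i = k then c else p $ i)"
  by (simp add: updv_def)

lemma updv_same[simp]: "updv k (p $ k) p = p"
  by (simp add: vec_eq_iff)

lemma updv_updv[simp]: "updv k c (updv k d p) = updv k c p"
  by (simp add: vec_eq_iff)

lemma has_derivative_updv: "((\<lambda>q. updv k c q) has_derivative (\<lambda>h. updv k 0 h)) F"
proof -
  have lin: "linear (\<lambda>h. updv k 0 h)"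
    by (rule linearI) (auto simp: vec_eq_iff)
  have eq: "(\<lambda>q. updv k c q) = (\<lambda>q. updv k 0 q + c *\<^sub>R axis k 1)"
    by (auto simp: vec_eq_iff axis_def)
  show ?thesis unfolding eq
    by (rule has_derivative_add_const) (use lin in \<open>simp add: linear_imp_has_derivative\<close>)
qed

lemma pd_updv: "f differentiable (at (updv k c p)) \<Longrightarrow> pd i (\<lambda>q. f (updv k c q)) p = (if i = k then 0 else pd i f (updv k c p))"
proof -
  assume d: "f differentiable (at (updv k c p))"
  have "((\<lambda>q. f (updv k c q)) has_derivative (\<lambda>h. (\<lambda>h. \<Sum>j\<in>UNIV. h $ j * pd j f (updv k c p)) (updv k 0 h))) (at p)"
    using has_derivative_compose[OF has_derivative_updv pd_works[OF d]] by (simp add: o_def)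
  from pd_eq[OF this] show ?thesis by (cases i rule: cases3; cases k rule: cases3) (auto simp: sum_3 axis_def)
qed

lemma has_derivative_transl: "((\<lambda>q. q + v) has_derivative (\<lambda>h. h)) F"
  by (rule has_derivative_add_const) (rule has_derivative_ident)

lemma pd_transl: "f differentiable (at (p + v)) \<Longrightarrow> pd i (\<lambda>q. f (q + v)) p = pd i f (p + v)"
proof -
  assume d: "f differentiable (at (p + v))"
  have "((\<lambda>q. f (q + v)) has_derivative (\<lambda>h. \<Sum>j\<in>UNIV. h $ j * pd j f (p + v))) (at p)"
    using has_derivative_compose[OF has_derivative_transl pd_works[OF d]] by (simp add: o_def)
  from pd_eq[OF this] show ?thesis by (cases i rule: cases3) (auto simp: sum_3 axis_def)
qed

lemma smooth3_updv: "smooth3 f \<Longrightarrow> smooth3 (\<lambda>q. f (updv k c q))"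
proof (rule smooth_class[where P="\<lambda>h. \<exists>f. smooth3 f \<and> h = (\<lambda>q. f (updv k c q))"])
  fix h :: "real^3 \<Rightarrow> real" and p assume "\<exists>f. smooth3 f \<and> h = (\<lambda>q. f (updv k c q))"
  then obtain f where f: "smooth3 f" "h = (\<lambda>q. f (updv k c q))" by blast
  have "(\<lambda>q. updv k c q) differentiable (at p)" using has_derivative_updv differentiable_def by blast
  then show "h differentiable (at p)" unfolding f(2)
    using differentiable_chain_at[of "\<lambda>q. updv k c q" p f] f(1) smooth3_D by (simp add: o_def)
next
  fix h :: "real^3 \<Rightarrow> real" and i assume "\<exists>f. smooth3 f \<and> h = (\<lambda>q. f (updv k c q))"
  then obtain f where f: "smooth3 f" "h = (\<lambda>q. f (updv k c q))" by blast
  show "\<exists>f. smooth3 f \<and> pd i h = (\<lambda>q. f (updv k c q))"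
  proof (cases "i = k")
    case True
    then have "pd i h = (\<lambda>q. (\<lambda>_. 0) (updv k c q))" unfolding f(2) using f(1) by (auto simp: pd_updv smooth3_D)
    then show ?thesis using smooth3_const by blast
  next
    case False
    then have "pd i h = (\<lambda>q. pd i f (updv k c q))" unfolding f(2) using f(1) by (auto simp: pd_updv smooth3_D)
    then show ?thesis using smooth3_pd f(1) by blast
  qed
qed auto

lemma pd_updv_f: "smooth3 f \<Longrightarrow> pd i (\<lambda>q. f (updv k c q)) = (\<lambda>q. if i = k then 0 else pd i f (updv k c q))"
  by (auto simp: pd_updv smooth3_D)

lemma smooth3_transl: "smooth3 f \<Longrightarrow> smooth3 (\<lambda>q. f (q + v))"
proof (rule smooth_class[where P="\<lambda>h. \<exists>f. smooth3 f \<and> h = (\<lambda>q. f (q + v))"])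
  fix h :: "real^3 \<Rightarrow> real" and p assume "\<exists>f. smooth3 f \<and> h = (\<lambda>q. f (q + v))"
  then obtain f where f: "smooth3 f" "h = (\<lambda>q. f (q + v))" by blast
  have "(\<lambda>q. q + v) differentiable (at p)" using has_derivative_transl differentiable_def by blast
  then show "h differentiable (at p)" unfolding f(2)
    using differentiable_chain_at[of "\<lambda>q. q + v" p f] f(1) smooth3_D by (simp add: o_def)
next
  fix h :: "real^3 \<Rightarrow> real" and i assume "\<exists>f. smooth3 f \<and> h = (\<lambda>q. f (q + v))"
  then obtain f where f: "smooth3 f" "h = (\<lambda>q. f (q + v))" by blast
  then have "pd i h = (\<lambda>q. pd i f (q + v))" using f(1) by (auto simp: pd_transl smooth3_D)
  then show "\<exists>f. smooth3 f \<and> pd i h = (\<lambda>q. f (q + v))" using smooth3_pd f(1) by blast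
qed auto

lemma pd_periodic: 
  assumes "\<And>q. f differentiable (at q)" "\<And>q. f (q + v) = f q"
  shows "pd i f (p + v) = pd i f p"
proof -
  have "pd i f (p + v) = pd i (\<lambda>q. f (q + v)) p" using pd_transl assms(1) by metis
  also have "(\<lambda>q. f (q + v)) = f" using assms(2) by auto
  finally show ?thesis .
qed

lemma tfun_pd: "tfun f \<Longrightarrow> tfun (pd i f)"
  unfolding tfun_def periodic3_def using pd_periodic smooth3_pd smooth3_D by metis

lemma line_deriv:
  assumes "\<And>q. f differentiable (at q)"
  shows "((\<lambda>t. f (updv k t p)) has_real_derivative pd k f (updv k t p)) (at t)"
proof -
  have e: "(\<lambda>t. updv k t p) = (\<lambda>t. updv k 0 p + t *\<^sub>R axis k 1)" by (auto simp: vec_eq_iff axis_def)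
  have "((\<lambda>t. updv k t p) has_derivative (\<lambda>s. s *\<^sub>R axis k 1)) (at t)"
    unfolding e by (auto intro!: derivative_eq_intros)
  from has_derivative_compose[OF this pd_works[OF assms]]
  have "((\<lambda>t. f (updv k t p)) has_derivative (\<lambda>s. s * pd k f (updv k t p))) (at t)"
    by (cases k rule: cases3) (auto simp: o_def sum_3 axis_def)
  then show ?thesis by (simp add: has_field_derivative_def mult.commute[of _ "pd k f (updv k t p)"])
qed

lemma const_line:
  assumes "\<And>q. f differentiable (at q)" "\<And>q. pd k f q = 0"
  shows "f (updv k c p) = f (updv k d p)"
  using DERIV_isconst_all[of "\<lambda>t. f (updv k t p)"] line_deriv[OF assms(1)] assms(2) by metis

lemma const_line0:
  assumes "\<And>q. f differentiable (at q)" "\<And>q. pd k f q = 0" "\<And>q. f (updv k 0 q) = 0"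
  shows "f p = 0"
  using const_line[OF assms(1,2), of "p $ k" p 0] assms(3) by simp

lemma pd_invariant:
  assumes "\<And>q. f differentiable (at q)" "\<And>c q. f (updv k c q) = f q"
  shows "pd k f p = 0"
proof -
  have "((\<lambda>t. f (updv k t p)) has_real_derivative pd k f (updv k (p $ k) p)) (at (p $ k))"
    using line_deriv[OF assms(1)] by blast
  moreover have "(\<lambda>t. f (updv k t p)) = (\<lambda>t. f p)" using assms(2) by auto
  ultimately have "((\<lambda>t. f p) has_real_derivative pd k f p) (at (p $ k))" by simp
  then show ?thesis using DERIV_const DERIV_unique by metis
qed


definition scv :: "3 \<Rightarrow> real \<Rightarrow> real^3 \<Rightarrow> real^3" where
  "scv k t p = (\<chi> i. if i = k then t * p $ i else p $ i)"

lemma scv_nth[simp]: "scv k t p $ i = (if i = k then t * p $ i else p $ i)"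
  by (simp add: scv_def)

lemma scv_one[simp]: "scv k 1 p = p" by (simp add: vec_eq_iff)

definition Jm :: "nat \<Rightarrow> 3 \<Rightarrow> (real^3 \<Rightarrow> real) \<Rightarrow> real^3 \<Rightarrow> real" where
  "Jm m k g p = integral {0..1} (\<lambda>t. t ^ m * g (scv k t p))"

lemma scv_eq: "scv k t x = x + ((t - 1) * x $ k) *\<^sub>R axis k 1"
  by (auto simp: vec_eq_iff axis_def algebra_simps)

lemma cont_scv: "continuous_on S (\<lambda>(x, t). scv k t x)"
  unfolding scv_eq split_beta
  by (intro continuous_intros continuous_on_compose2[of UNIV "\<lambda>x. x $ k"]) (auto intro: linear_continuous_on bounded_linear_vec_nth)

lemma has_derivative_scv: "((\<lambda>x. scv k t x) has_derivative (\<lambda>h. scv k t h)) F"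
proof -
  have "linear (\<lambda>h. scv k t h)" by (rule linearI) (auto simp: vec_eq_iff algebra_simps)
  then show ?thesis by (simp add: linear_imp_has_derivative)
qed

lemma Jm_deriv:
  assumes g: "smooth3 g"
  shows "(Jm m k g has_derivative (\<lambda>h. \<Sum>i\<in>UNIV. h $ i * Jm (if i = k then Suc m else m) k (pd i g) p)) (at p)"
proof -
  define c where "c i x t = t ^ m * (if i = k then t else 1) * pd i g (scv k t x)" for i x t
  define fx where "fx x t = (\<Sum>i\<in>UNIV. c i x t *\<^sub>R blinfun_inner_left (axis i (1::real)))" for x t
  have fxa: "blinfun_apply (fx x t) h = (\<Sum>i\<in>UNIV. h $ i * c i x t)" for x t h
    by (simp add: fx_def blinfun.sum_left inner_axis mult.commute blinfun.scaleR_left)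
  have contc: "continuous_on (UNIV \<times> cbox 0 1) (\<lambda>(x, t). c i x t)" for i
  proof -
    have "continuous_on (UNIV \<times> cbox 0 1) (\<lambda>(x, t). pd i g (scv k t x))"
      using continuous_on_compose2[OF smooth3_cont[OF smooth3_pd[OF g]] cont_scv] by (simp add: split_beta)
    then show ?thesis unfolding c_def split_beta
      by (cases "i = k") (auto intro!: continuous_intros)
  qed
  have cont: "continuous_on (UNIV \<times> cbox 0 1) (\<lambda>(x, t). fx x t)"
    unfolding fx_def split_beta using contc unfolding split_beta
    by (intro continuous_intros) auto
  have fder: "((\<lambda>x. t ^ m * g (scv k t x)) has_derivative blinfun_apply (fx x t)) (at x within UNIV)" for x t
  proof -
    have "((\<lambda>x. g (scv k t x)) has_derivative (\<lambda>h. \<Sum>j\<in>UNIV. scv k t h $ j * pd j g (scv k t x))) (at x)"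
      using has_derivative_compose[OF has_derivative_scv pd_works[OF smooth3_D[OF g]]] by (simp add: o_def)
    from has_derivative_mult_right[OF this, of "t ^ m"]
    show ?thesis
      by (rule has_derivative_eq_rhs) (auto simp: fxa c_def sum_3 algebra_simps)
  qed
  have intf: "(\<lambda>t. t ^ m * g (scv k t x)) integrable_on cbox 0 1" for x
  proof -
    have "continuous_on (UNIV \<times> cbox 0 1) (\<lambda>(x, t). g (scv k t x))"
      using continuous_on_compose2[OF smooth3_cont[OF g] cont_scv] by (simp add: split_beta)
    from continuous_on_compose2[OF this, of "cbox 0 1" "\<lambda>t. (x, t)"]
    have "continuous_on (cbox 0 1) (\<lambda>t. g (scv k t x))"
      using continuous_on_Pair[OF continuous_on_const continuous_on_id] by auto
    then show ?thesis by (intro integrable_continuous continuous_intros)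
  qed
  have L: "((\<lambda>x. integral (cbox 0 1) (\<lambda>t. t ^ m * g (scv k t x))) has_derivative integral (cbox 0 1) (fx p)) (at p within UNIV)"
    by (rule leibniz_rule[OF fder intf cont]) auto
  have intfx: "fx p integrable_on cbox 0 1"
  proof -
    from continuous_on_compose2[OF cont, of "cbox 0 1" "\<lambda>t. (p, t)"]
    have "continuous_on (cbox 0 1) (fx p)"
      using continuous_on_Pair[OF continuous_on_const continuous_on_id] by auto
    then show ?thesis by (rule integrable_continuous)
  qed
  have intc: "(c i p) integrable_on cbox 0 1" for i
  proof -
    from continuous_on_compose2[OF contc, of "cbox 0 1" "\<lambda>t. (p, t)" i]
    have "continuous_on (cbox 0 1) (c i p)"
      using continuous_on_Pair[OF continuous_on_const continuous_on_id] by auto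
    then show ?thesis by (rule integrable_continuous)
  qed
  have "blinfun_apply (integral (cbox 0 1) (fx p)) h = (\<Sum>i\<in>UNIV. h $ i * Jm (if i = k then Suc m else m) k (pd i g) p)" for h
  proof -
    have "blinfun_apply (integral (cbox 0 1) (fx p)) h = integral (cbox 0 1) (\<lambda>t. \<Sum>i\<in>UNIV. h $ i * c i p t)"
      by (subst blinfun_apply_integral[OF intfx]) (simp add: fxa)
    also have "\<dots> = (\<Sum>i\<in>UNIV. h $ i * integral (cbox 0 1) (c i p))"
    proof (subst integral_sum)
      show "\<And>i. i \<in> UNIV \<Longrightarrow> (\<lambda>t. h $ i * c i p t) integrable_on cbox 0 1"
        using integrable_on_cmult_left[OF intc] by simp
    qed auto
    also have "\<dots> = (\<Sum>i\<in>UNIV. h $ i * Jm (if i = k then Suc m else m) k (pd i g) p)"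
      by (intro sum.cong refl) (auto simp: Jm_def c_def[abs_def] mult.assoc mult.commute mult.left_commute)
    finally show ?thesis .
  qed
  then have "blinfun_apply (integral (cbox 0 1) (fx p)) = (\<lambda>h. \<Sum>i\<in>UNIV. h $ i * Jm (if i = k then Suc m else m) k (pd i g) p)"
    by (rule ext)
  with L show ?thesis by (simp add: Jm_def[abs_def])
qed

lemma sum_axis: "(\<Sum>j\<in>UNIV. axis i (1::real) $ j * f j) = f (i::3)"
  by (cases i rule: cases3) (auto simp: sum_3 axis_def)

lemma pd_Jm: "smooth3 g \<Longrightarrow> pd i (Jm m k g) p = Jm (if i = k then Suc m else m) k (pd i g) p"
  by (subst pd_eq[OF Jm_deriv]) (simp_all add: sum_axis[where f="\<lambda>i. Jm (if i = k then Suc m else m) k (pd i g) p"])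

lemma pd_Jm_f: "smooth3 g \<Longrightarrow> pd i (Jm m k g) = Jm (if i = k then Suc m else m) k (pd i g)"
  using pd_Jm by blast

lemma smooth3_Jm: "smooth3 g \<Longrightarrow> smooth3 (Jm m k g)"
proof (rule smooth_class[where P="\<lambda>h. \<exists>m g. smooth3 g \<and> h = Jm m k g"])
  fix h :: "real^3 \<Rightarrow> real" and p assume "\<exists>m g. smooth3 g \<and> h = Jm m k g"
  then show "h differentiable (at p)" using Jm_deriv differentiable_def by blast
next
  fix h :: "real^3 \<Rightarrow> real" and i assume "\<exists>m g. smooth3 g \<and> h = Jm m k g"
  then obtain m g where "smooth3 g" "h = Jm m k g" by blast
  then show "\<exists>m g. smooth3 g \<and> pd i h = Jm m k g" using pd_Jm_f smooth3_pd by blast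
qed auto

lemma cont_param: "smooth3 g \<Longrightarrow> continuous_on S (\<lambda>t. g (scv k t p))"
  unfolding scv_eq
  by (rule continuous_on_compose2[OF smooth3_cont]) (auto intro!: continuous_intros)

definition Ik :: "3 \<Rightarrow> (real^3 \<Rightarrow> real) \<Rightarrow> real^3 \<Rightarrow> real" where
  "Ik k g p = p $ k * Jm 0 k g p"

lemma smooth3_Ik: "smooth3 g \<Longrightarrow> smooth3 (Ik k g)"
  unfolding Ik_def[abs_def] by (intro smooth3_mult smooth3_coord smooth3_Jm)

lemma pd_Ik_other: "smooth3 g \<Longrightarrow> j \<noteq> k \<Longrightarrow> pd j (Ik k g) = Ik k (pd j g)"
  unfolding Ik_def[abs_def]
  by (subst pd_mult_f) (auto intro!: smooth3_coord smooth3_Jm simp: pd_coord_f pd_Jm_f)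

lemma scv_updv: "scv k t p = updv k (t * p $ k) p"
  by (simp add: vec_eq_iff)

lemma FTC_scv:
  assumes g: "smooth3 g"
  shows "Jm 0 k g p + p $ k * Jm 1 k (pd k g) p = g p"
proof -
  define h where "h t = t * g (scv k t p)" for t
  define h' where "h' t = g (scv k t p) + p $ k * (t * pd k g (scv k t p))" for t
  have der: "(h has_real_derivative h' t) (at t)" for t
  proof -
    have "((\<lambda>t. t * p $ k) has_real_derivative p $ k) (at t)"
      by (auto intro!: derivative_eq_intros)
    from DERIV_chain2[OF line_deriv[OF smooth3_D[OF g], where k=k and t="t * p $ k" and p=p] this]
    have "((\<lambda>t. g (scv k t p)) has_real_derivative pd k g (scv k t p) * p $ k) (at t)"
      by (simp add: scv_updv)
    from DERIV_mult[OF DERIV_ident this]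
    show ?thesis unfolding h_def h'_def by (simp add: algebra_simps)
  qed
  have "(h' has_integral (h 1 - h 0)) {0..1}"
    by (rule fundamental_theorem_of_calculus)
       (auto simp: has_real_derivative_iff_has_vector_derivative[symmetric] intro: DERIV_subset[OF der])
  then have I: "integral {0..1} h' = g p" by (simp add: h_def integral_unique vec_eq_iff)
  have i1: "(\<lambda>t. g (scv k t p)) integrable_on {0..1}"
    by (intro integrable_continuous_interval cont_param g)
  have i2: "(\<lambda>t. t * pd k g (scv k t p)) integrable_on {0..1}"
    by (intro integrable_continuous_interval continuous_intros cont_param smooth3_pd g)
  have "integral {0..1} h' = integral {0..1} (\<lambda>t. g (scv k t p)) + p $ k * integral {0..1} (\<lambda>t. t * pd k g (scv k t p))"
    unfolding h'_def by (simp add: integral_add i1 i2 integrable_on_cmult_left[OF i2, of "p $ k", simplified])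
  with I show ?thesis by (simp add: Jm_def)
qed

lemma pd_Ik_same: "smooth3 g \<Longrightarrow> pd k (Ik k g) = g"
proof (rule ext)
  fix p assume g: "smooth3 g"
  have "pd k (Ik k g) p = Jm 0 k g p + p $ k * Jm 1 k (pd k g) p"
    unfolding Ik_def[abs_def] using g
    by (subst pd_mult_f) (auto intro!: smooth3_coord smooth3_Jm simp: pd_coord_f pd_Jm_f)
  then show "pd k (Ik k g) p = g p" using FTC_scv[OF g] by simp
qed

lemma Ik_zero: "p $ k = 0 \<Longrightarrow> Ik k g p = 0"
  by (simp add: Ik_def)


lemma Ik_const: "Ik k (\<lambda>q. c) p = c * p $ k"
  by (simp add: Ik_def Jm_def)

lemma Ik_transl:
  assumes "v $ k = 0" "\<And>q. g (q + v) = g q"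
  shows "Ik k g (p + v) = Ik k g p"
proof -
  have "scv k t (p + v) = scv k t p + v" for t using assms(1) by (simp add: vec_eq_iff)
  then show ?thesis using assms by (simp add: Ik_def Jm_def)
qed

lemma Ik_updv:
  assumes "j \<noteq> k"
  shows "Ik k (\<lambda>q. g (updv j c q)) p = Ik k g (updv j c p)"
proof -
  have "scv k t (updv j c p) = updv j c (scv k t p)" for t using assms by (simp add: vec_eq_iff)
  then show ?thesis using assms by (simp add: Ik_def Jm_def)
qed

lemma Ik_indep:
  assumes "j \<noteq> k" "\<And>c q. g (updv j c q) = g q"
  shows "Ik k g (updv j c p) = Ik k g p"
  using Ik_updv[OF assms(1), of g c p] assms(2) by simp

lemma pd_Ik_f: "smooth3 g \<Longrightarrow> pd j (Ik k g) = (if j = k then g else Ik k (pd j g))"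
  using pd_Ik_same pd_Ik_other by auto

lemma D_Ik: "smooth3 g \<Longrightarrow> Ik k g differentiable (at p)"
  using smooth3_D smooth3_Ik by blast

lemma FTC_Ik:
  assumes g: "smooth3 g"
  shows "Ik k (pd k g) p = g p - g (updv k 0 p)"
proof -
  have "(\<lambda>q. Ik k (pd k g) q - g q + g (updv k 0 q)) p = 0"
  proof (rule const_line0[where k=k and f="\<lambda>q. Ik k (pd k g) q - g q + g (updv k 0 q)"])
    fix q
    show "(\<lambda>q. Ik k (pd k g) q - g q + g (updv k 0 q)) differentiable at q"
      using g by (intro differentiable_add differentiable_diff D_Ik smooth3_pd smooth3_D smooth3_updv)
    show "pd k (\<lambda>q. Ik k (pd k g) q - g q + g (updv k 0 q)) q = 0"
      using g by (simp add: pd_add_f pd_diff_f smooth3_diff smooth3_Ik smooth3_pd smooth3_updv pd_updv_f pd_Ik_same)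
    show "Ik k (pd k g) (updv k 0 q) - g (updv k 0 q) + g (updv k 0 (updv k 0 q)) = 0"
      by (simp add: Ik_zero)
  qed
  then show ?thesis by simp
qed

lemma Ik_period:
  assumes g: "smooth3 g" and per: "\<And>q. g (q + axis k (2*pi)) = g q"
  shows "Ik k g (p + axis k (2*pi)) = Ik k g p + Ik k g (updv k (2*pi) p)"
proof -
  let ?a = "axis k (2*pi)"
  have "(\<lambda>q. Ik k g (q + ?a) - Ik k g q - Ik k g (updv k (2*pi) q)) p = 0"
  proof (rule const_line0[where k=k and f="\<lambda>q. Ik k g (q + ?a) - Ik k g q - Ik k g (updv k (2*pi) q)"])
    fix q
    have s1: "smooth3 (\<lambda>q. Ik k g (q + ?a))" using g by (intro smooth3_transl smooth3_Ik)
    have s2: "smooth3 (\<lambda>q. Ik k g (updv k (2*pi) q))" using g by (intro smooth3_updv smooth3_Ik)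
    show "(\<lambda>q. Ik k g (q + ?a) - Ik k g q - Ik k g (updv k (2*pi) q)) differentiable at q"
      using g s1 s2 by (intro differentiable_diff smooth3_D smooth3_Ik)
    have "pd k (\<lambda>q. Ik k g (q + ?a)) q = g (q + ?a)"
      using pd_transl[OF D_Ik[OF g]] pd_Ik_same[OF g] by simp
    then show "pd k (\<lambda>q. Ik k g (q + ?a) - Ik k g q - Ik k g (updv k (2*pi) q)) q = 0"
      using g s1 s2 per by (simp add: pd_diff_f smooth3_diff smooth3_Ik pd_updv_f pd_Ik_same)
    have "updv k 0 q + ?a = updv k (2*pi) q" by (simp add: vec_eq_iff axis_def)
    then show "Ik k g (updv k 0 q + ?a) - Ik k g (updv k 0 q) - Ik k g (updv k (2*pi) (updv k 0 q)) = 0"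
      by (simp add: Ik_zero)
  qed
  then show ?thesis by simp
qed

lemma Ik_lin:
  assumes f: "smooth3 f" and g: "smooth3 g"
  shows "Ik k (\<lambda>q. a * f q + b * g q) p = a * Ik k f p + b * Ik k g p"
proof -
  have "(\<lambda>q. Ik k (\<lambda>q. a * f q + b * g q) q - (a * Ik k f q + b * Ik k g q)) p = 0"
  proof (rule const_line0[where k=k and f="\<lambda>q. Ik k (\<lambda>q. a * f q + b * g q) q - (a * Ik k f q + b * Ik k g q)"])
    fix q
    have s: "smooth3 (\<lambda>q. a * f q + b * g q)" using f g by (intro smooth3_add smooth3_cmult)
    show "(\<lambda>q. Ik k (\<lambda>q. a * f q + b * g q) q - (a * Ik k f q + b * Ik k g q)) differentiable at q"
      using f g s by (intro differentiable_diff differentiable_add differentiable_mult differentiable_const D_Ik)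
    show "pd k (\<lambda>q. Ik k (\<lambda>q. a * f q + b * g q) q - (a * Ik k f q + b * Ik k g q)) q = 0"
      using f g s by (simp add: pd_diff_f pd_add_f pd_cmult_f smooth3_diff smooth3_add smooth3_cmult smooth3_Ik pd_Ik_same)
    show "Ik k (\<lambda>q. a * f q + b * g q) (updv k 0 q) - (a * Ik k f (updv k 0 q) + b * Ik k g (updv k 0 q)) = 0"
      by (simp add: Ik_zero)
  qed
  then show ?thesis by simp
qed

lemma clairaut:
  assumes f: "smooth3 f"
  shows "pd i (pd j f) = pd j (pd i f)"
proof (cases "i = j")
  case False
  have e: "(\<lambda>q. f (updv j 0 q) + Ik j (pd j f) q) = f"
    by (rule ext) (simp add: FTC_Ik[OF f])
  have sf: "smooth3 (\<lambda>q. f (updv j 0 q))" "smooth3 (Ik j (pd j f))"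
    using f by (auto intro: smooth3_updv smooth3_Ik smooth3_pd)
  have "pd i (\<lambda>q. f (updv j 0 q) + Ik j (pd j f) q) = (\<lambda>q. pd i f (updv j 0 q) + Ik j (pd i (pd j f)) q)"
    using False f sf by (simp add: pd_add_f pd_updv_f pd_Ik_other smooth3_pd)
  then have e2: "pd i f = (\<lambda>q. pd i f (updv j 0 q) + Ik j (pd i (pd j f)) q)" using e by simp
  have sf2: "smooth3 (\<lambda>q. pd i f (updv j 0 q))" "smooth3 (Ik j (pd i (pd j f)))"
    using f by (auto intro: smooth3_updv smooth3_Ik smooth3_pd)
  have "pd j (pd i f) = pd j (\<lambda>q. pd i f (updv j 0 q) + Ik j (pd i (pd j f)) q)"
    using e2 by (rule arg_cong)
  also have "\<dots> = pd i (pd j f)"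
    using sf2 f by (simp add: pd_add_f pd_updv_f pd_Ik_same smooth3_pd)
  finally show ?thesis by simp
qed simp


lemma th1: "(\<lambda>q. theta0 q $ 1) = (\<lambda>q. cos (q $ 3))" by (simp add: theta0_def)
lemma th2: "(\<lambda>q. theta0 q $ 2) = (\<lambda>q. sin (q $ 3))" by (simp add: theta0_def)
lemma th3: "(\<lambda>q. theta0 q $ 3) = (\<lambda>q. 0)" by (simp add: theta0_def)
lemma th_nth[simp]: "theta0 q $ 1 = cos (q $ 3)" "theta0 q $ 2 = sin (q $ 3)" "theta0 q $ 3 = 0"
  by (simp_all add: theta0_def)

lemma pd_th: "pd i (\<lambda>q. theta0 q $ 1) p = (if i = 3 then - sin (p $ 3) else 0)"
  "pd i (\<lambda>q. theta0 q $ 2) p = (if i = 3 then cos (p $ 3) else 0)"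
  "pd i (\<lambda>q. theta0 q $ 3) p = 0"
  by (simp_all add: th1 th2 th3 pd_cos3 pd_sin3 pd_const)

lemma d1_theta0: "d1 theta0 p $ i $ j =
   (if i = 1 \<and> j = 3 then sin (p $ 3) else if i = 3 \<and> j = 1 then - sin (p $ 3)
    else if i = 2 \<and> j = 3 then - cos (p $ 3) else if i = 3 \<and> j = 2 then cos (p $ 3) else 0)"
  unfolding d1_def by (cases i rule: cases3; cases j rule: cases3) (simp_all add: pd_th pd_cos3 pd_sin3 pd_const)

lemma wedge_theta0: "wedge12 theta0 (d1 theta0) p = -1"
proof -
  have "sin (p $ 3) * sin (p $ 3) + cos (p $ 3) * cos (p $ 3) = 1"
    using sin_cos_squared_add[of "p $ 3"] by (simp add: power2_eq_square)
  then show ?thesis unfolding wedge12_def by (simp add: d1_theta0 algebra_simps)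
qed

lemma mu_theta0: "mu theta0 p = -1/2"
  by (simp add: mu_def wedge_theta0)

lemma periodic_z: "periodic3 (\<lambda>q. f (q $ 3))" if "\<And>x. f (x + 2*pi) = f x"
  unfolding periodic3_def using that by (auto simp: axis_def)

lemma tfun_cos3: "tfun (\<lambda>q. cos (q $ 3))"
  unfolding tfun_def using smooth3_cos3 periodic_z[of cos] by simp

lemma tfun_sin3: "tfun (\<lambda>q. sin (q $ 3))"
  unfolding tfun_def using smooth3_sin3 periodic_z[of sin] by simp

lemma tfun_const: "tfun (\<lambda>q. c)"
  unfolding tfun_def periodic3_def using smooth3_const by simp

lemma tvec_theta0: "tvec theta0"
  unfolding tvec_def forall_3 using tfun_cos3 tfun_sin3 tfun_const by (simp add: th1 th2 th3)

lemma contact_theta0: "contact_form theta0"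
  unfolding contact_form_def using tvec_theta0 wedge_theta0 by simp

lemma tvec_const: "tvec (\<lambda>p. v)"
  unfolding tvec_def using tfun_const by simp

lemma lie1_const: "lie1 (\<lambda>p. v) theta0 p $ j = v $ 3 * pd 3 (\<lambda>q. theta0 q $ j) p"
  unfolding lie1_def by (cases j rule: cases3) (simp_all add: sum_3 pd_th pd_const pd_cos3 pd_sin3)

lemma dX_sc: "dX \<in> strict_contact theta0"
  unfolding strict_contact_def dX_def using tvec_const
  by (auto simp: vec_eq_iff lie1_const axis_def)

lemma dY_sc: "dY \<in> strict_contact theta0"
  unfolding strict_contact_def dY_def using tvec_const
  by (auto simp: vec_eq_iff lie1_const axis_def)


lemma reeb_theta0:
  assumes "reeb theta0 R"
  shows "R p = vector [cos (p $ 3), sin (p $ 3), 0]"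
proof -
  let ?c = "cos (p $ 3)" and ?s = "sin (p $ 3)"
  have r: "theta0 p \<bullet> R p = 1" "\<And>j. (\<Sum>i\<in>UNIV. R p $ i * d1 theta0 p $ i $ j) = 0"
    using assms unfolding reeb_def by auto
  have e0: "?c * R p $ 1 + ?s * R p $ 2 = 1" using r(1) by (simp add: inner_vec_def sum_3)
  have e1: "R p $ 3 * ?s = 0" using r(2)[of 1] by (simp add: sum_3 d1_theta0)
  have e2: "R p $ 3 * ?c = 0" using r(2)[of 2] by (simp add: sum_3 d1_theta0)
  have e3: "R p $ 1 * ?s - R p $ 2 * ?c = 0" using r(2)[of 3] by (simp add: sum_3 d1_theta0)
  have sc: "?s * ?s + ?c * ?c = 1" using sin_cos_squared_add[of "p $ 3"] by (simp add: power2_eq_square)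
  have "R p $ 3 = (R p $ 3 * ?s) * ?s + (R p $ 3 * ?c) * ?c" using sc by algebra
  then have z: "R p $ 3 = 0" using e1 e2 by simp
  have "R p $ 1 = ?c * (?c * R p $ 1 + ?s * R p $ 2) + ?s * (R p $ 1 * ?s - R p $ 2 * ?c)" using sc by algebra
  then have x: "R p $ 1 = ?c" using e0 e3 by simp
  have "R p $ 2 = ?s * (?c * R p $ 1 + ?s * R p $ 2) - ?c * (R p $ 1 * ?s - R p $ 2 * ?c)" using sc by algebra
  then have y: "R p $ 2 = ?s" using e0 e3 by simp
  show ?thesis using x y z by (simp add: vec_eq_iff forall_3)
qed

lemma curve_deriv: "((\<lambda>t. vector [t * a, t * b, c] :: real^3) has_vector_derivative vector [a, b, 0]) (at t)"
proof -
  have e: "(\<lambda>t. vector [t * a, t * b, c] :: real^3) = (\<lambda>t. t *\<^sub>R vector [a, b, 0] + vector [0, 0, c])"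
    by (auto simp: vec_eq_iff forall_3)
  show ?thesis unfolding e by (auto intro!: derivative_eq_intros)
qed

lemma not_regular: "\<not> regular theta0"
proof
  assume "regular theta0"
  then obtain R T where R: "reeb theta0 R" and T: "T > 0" and
    P: "\<And>\<gamma>. (\<forall>t. (\<gamma> has_vector_derivative R (\<gamma> t)) (at t)) \<Longrightarrow> teq (\<gamma> (0 + T)) (\<gamma> 0)"
    unfolding regular_def by blast
  have key: "\<exists>k::int. T * cos c = 2 * pi * k" for c
  proof -
    define \<gamma> where "\<gamma> t = (vector [t * cos c, t * sin c, c] :: real^3)" for t
    have "(\<gamma> has_vector_derivative R (\<gamma> t)) (at t)" for t
      using curve_deriv[of "cos c" "sin c" c t] reeb_theta0[OF R, of "\<gamma> t"] by (simp add: \<gamma>_def[abs_def] \<gamma>_def)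
    then have "teq (\<gamma> (0 + T)) (\<gamma> 0)" using P by blast
    then obtain k :: int where "\<gamma> (0 + T) $ 1 - \<gamma> 0 $ 1 = 2 * pi * k" unfolding teq_def by blast
    then show ?thesis by (auto simp: \<gamma>_def)
  qed
  obtain k1 :: int where k1: "T = 2 * pi * k1" using key[of 0] by auto
  have "k1 \<ge> 1" using k1 T by (smt (verit, best) mult_nonneg_nonpos of_int_le_0_iff pi_gt_zero)
  then have T2: "T \<ge> 2 * pi" using k1 by (simp add: mult_le_cancel_left1)
  define c where "c = arccos (pi / T)"
  have pT: "0 < pi / T" "pi / T \<le> 1" using T T2 by (auto simp: field_simps)
  have "cos c = pi / T" unfolding c_def using pT by (intro cos_arccos) auto
  then have "T * cos c = pi" using T by simp
  with key[of c] obtain k2 :: int where "pi = 2 * pi * k2" by auto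
  then have "1 = 2 * real_of_int k2" by simp
  then have "(1::int) = 2 * k2" by linarith
  then show False by presburger
qed


definition hf :: "(real^3 \<Rightarrow> real^3) \<Rightarrow> real^3 \<Rightarrow> real" where
  "hf X q = cos (q $ 3) * X q $ 1 + sin (q $ 3) * X q $ 2"

lemma sc_tfun: "X \<in> strict_contact theta0 \<Longrightarrow> tfun (\<lambda>q. X q $ i)"
  by (simp add: strict_contact_def tvec_def)

lemma sc_smooth: "X \<in> strict_contact theta0 \<Longrightarrow> smooth3 (\<lambda>q. X q $ i)"
  using sc_tfun tfun_def by blast

lemma lie1_theta0: "lie1 X theta0 p $ 1 = - sin (p $ 3) * X p $ 3 + cos (p $ 3) * pd 1 (\<lambda>q. X q $ 1) p + sin (p $ 3) * pd 1 (\<lambda>q. X q $ 2) p"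
  "lie1 X theta0 p $ 2 = cos (p $ 3) * X p $ 3 + cos (p $ 3) * pd 2 (\<lambda>q. X q $ 1) p + sin (p $ 3) * pd 2 (\<lambda>q. X q $ 2) p"
  "lie1 X theta0 p $ 3 = cos (p $ 3) * pd 3 (\<lambda>q. X q $ 1) p + sin (p $ 3) * pd 3 (\<lambda>q. X q $ 2) p"
  unfolding lie1_def by (simp_all add: sum_3 pd_cos3 pd_sin3 pd_const)

lemma sc_E:
  assumes "X \<in> strict_contact theta0"
  shows "- sin (p $ 3) * X p $ 3 + cos (p $ 3) * pd 1 (\<lambda>q. X q $ 1) p + sin (p $ 3) * pd 1 (\<lambda>q. X q $ 2) p = 0"
    "cos (p $ 3) * X p $ 3 + cos (p $ 3) * pd 2 (\<lambda>q. X q $ 1) p + sin (p $ 3) * pd 2 (\<lambda>q. X q $ 2) p = 0"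
    "cos (p $ 3) * pd 3 (\<lambda>q. X q $ 1) p + sin (p $ 3) * pd 3 (\<lambda>q. X q $ 2) p = 0"
proof -
  have "lie1 X theta0 p = 0" using assms unfolding strict_contact_def by simp
  then have "lie1 X theta0 p $ j = 0" for j by simp
  then show "- sin (p $ 3) * X p $ 3 + cos (p $ 3) * pd 1 (\<lambda>q. X q $ 1) p + sin (p $ 3) * pd 1 (\<lambda>q. X q $ 2) p = 0"
    "cos (p $ 3) * X p $ 3 + cos (p $ 3) * pd 2 (\<lambda>q. X q $ 1) p + sin (p $ 3) * pd 2 (\<lambda>q. X q $ 2) p = 0"
    "cos (p $ 3) * pd 3 (\<lambda>q. X q $ 1) p + sin (p $ 3) * pd 3 (\<lambda>q. X q $ 2) p = 0"
    using lie1_theta0[of X p] by (metis (no_types, lifting))+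
qed

lemma tfun_add: "tfun f \<Longrightarrow> tfun g \<Longrightarrow> tfun (\<lambda>q. f q + g q)"
  unfolding tfun_def periodic3_def by (auto intro: smooth3_add)
lemma tfun_diff: "tfun f \<Longrightarrow> tfun g \<Longrightarrow> tfun (\<lambda>q. f q - g q)"
  unfolding tfun_def periodic3_def by (auto intro: smooth3_diff)
lemma tfun_mult: "tfun f \<Longrightarrow> tfun g \<Longrightarrow> tfun (\<lambda>q. f q * g q)"
  unfolding tfun_def periodic3_def by (auto intro: smooth3_mult)
lemma tfun_cmult: "tfun f \<Longrightarrow> tfun (\<lambda>q. c * f q)"
  unfolding tfun_def periodic3_def by (auto intro: smooth3_cmult)
lemma tfun_minus: "tfun f \<Longrightarrow> tfun (\<lambda>q. - f q)"
  unfolding tfun_def periodic3_def by (auto intro: smooth3_minus)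

lemma tfun_hf: "X \<in> strict_contact theta0 \<Longrightarrow> tfun (hf X)"
  unfolding hf_def[abs_def] by (intro tfun_add tfun_mult tfun_cos3 tfun_sin3 sc_tfun)

lemma smooth_hf: "X \<in> strict_contact theta0 \<Longrightarrow> smooth3 (hf X)"
  using tfun_hf tfun_def by blast

lemma pd_hf:
  assumes X: "X \<in> strict_contact theta0"
  shows "pd 1 (hf X) p = sin (p $ 3) * X p $ 3"
    "pd 2 (hf X) p = - cos (p $ 3) * X p $ 3"
    "pd 3 (hf X) p = - sin (p $ 3) * X p $ 1 + cos (p $ 3) * X p $ 2"
proof -
  have s: "smooth3 (\<lambda>q. X q $ 1)" "smooth3 (\<lambda>q. X q $ 2)" using sc_smooth[OF X] by auto
  have "pd i (hf X) p = (if i = 3 then - sin (p $ 3) else 0) * X p $ 1 + cos (p $ 3) * pd i (\<lambda>q. X q $ 1) p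
      + ((if i = 3 then cos (p $ 3) else 0) * X p $ 2 + sin (p $ 3) * pd i (\<lambda>q. X q $ 2) p)" for i
    unfolding hf_def[abs_def] using s
    by (simp add: pd_add_f pd_mult_f smooth3_mult smooth3_cos3 smooth3_sin3 pd_cos3_f pd_sin3_f)
  then show "pd 1 (hf X) p = sin (p $ 3) * X p $ 3"
    "pd 2 (hf X) p = - cos (p $ 3) * X p $ 3"
    "pd 3 (hf X) p = - sin (p $ 3) * X p $ 1 + cos (p $ 3) * X p $ 2"
    using sc_E[OF X, of p] by (auto simp: algebra_simps)
qed

lemma sc2: "sin x * sin x + cos x * cos (x::real) = 1"
  using sin_cos_squared_add[of x] by (simp add: power2_eq_square)

lemma X_hf:
  assumes X: "X \<in> strict_contact theta0"
  shows "X p $ 1 = cos (p $ 3) * hf X p - sin (p $ 3) * pd 3 (hf X) p"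
    "X p $ 2 = sin (p $ 3) * hf X p + cos (p $ 3) * pd 3 (hf X) p"
    "X p $ 3 = sin (p $ 3) * pd 1 (hf X) p - cos (p $ 3) * pd 2 (hf X) p"
    "cos (p $ 3) * pd 1 (hf X) p + sin (p $ 3) * pd 2 (hf X) p = 0"
proof -
  have h1: "x = cc * (cc * x + ss * y) - ss * (- ss * x + cc * y)" "y = ss * (cc * x + ss * y) + cc * (- ss * x + cc * y)"
     "z = ss * (ss * z) - cc * (- cc * z)" "cc * (ss * z) + ss * (- cc * z) = 0" if "ss * ss + cc * cc = 1" for x y z ss cc :: real
    using that by (algebra, algebra, algebra, simp add: algebra_simps)
  show "X p $ 1 = cos (p $ 3) * hf X p - sin (p $ 3) * pd 3 (hf X) p"
    "X p $ 2 = sin (p $ 3) * hf X p + cos (p $ 3) * pd 3 (hf X) p"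
    "X p $ 3 = sin (p $ 3) * pd 1 (hf X) p - cos (p $ 3) * pd 2 (hf X) p"
    "cos (p $ 3) * pd 1 (hf X) p + sin (p $ 3) * pd 2 (hf X) p = 0"
    unfolding pd_hf[OF X] hf_def using h1[OF sc2[of "p $ 3"]] by simp_all
qed


lemma updv_transl_other: "j \<noteq> k \<Longrightarrow> updv k c (q + axis j x) = updv k c q + axis j x"
  by (auto simp: vec_eq_iff axis_def)
lemma updv_transl_same: "updv k c (q + axis k x) = updv k c q"
  by (auto simp: vec_eq_iff axis_def)
lemma updv_comm: "j \<noteq> k \<Longrightarrow> updv j c (updv k d q) = updv k d (updv j c q)"
  by (auto simp: vec_eq_iff)
lemma axis_nth_other: "j \<noteq> k \<Longrightarrow> axis j x $ k = 0"
  by (simp add: axis_def)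

lemma interior3_eq:
  "interior3 V m p $ 1 $ 1 = 0" "interior3 V m p $ 2 $ 2 = 0" "interior3 V m p $ 3 $ 3 = 0"
  "interior3 V m p $ 1 $ 2 = m p * V p $ 3" "interior3 V m p $ 2 $ 1 = - m p * V p $ 3"
  "interior3 V m p $ 1 $ 3 = - m p * V p $ 2" "interior3 V m p $ 3 $ 1 = m p * V p $ 2"
  "interior3 V m p $ 2 $ 3 = m p * V p $ 1" "interior3 V m p $ 3 $ 2 = - m p * V p $ 1"
  unfolding interior3_def by (simp_all add: det_3 axis_def)

lemma mat3_eq:
  fixes M N :: "real^3^3"
  assumes "\<And>i j. M $ i $ j = - M $ j $ i" "\<And>i j. N $ i $ j = - N $ j $ i"
    "M $ 1 $ 2 = N $ 1 $ 2" "M $ 1 $ 3 = N $ 1 $ 3" "M $ 2 $ 3 = N $ 2 $ 3"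
  shows "M = N"
proof -
  have d: "M $ i $ i = 0" "N $ i $ i = 0" for i using assms(1)[of i i] assms(2)[of i i] by auto
  show ?thesis unfolding vec_eq_iff forall_3
    using assms d by (metis minus_equation_iff)
qed

lemma d1_anti: "d1 a p $ i $ j = - d1 a p $ j $ i"
  by (simp add: d1_def)

lemma interior3_anti: "interior3 V m p $ i $ j = - interior3 V m p $ j $ i"
  by (cases i rule: cases3; cases j rule: cases3) (simp_all add: interior3_eq)

lemma pd_th12: "pd 1 (\<lambda>q. theta0 q $ j) p = 0" "pd 2 (\<lambda>q. theta0 q $ j) p = 0"
  by (cases j rule: cases3; simp add: th1 th2 th3 pd_cos3 pd_sin3 pd_const)+

lemma lie1_shift:
  assumes X: "X \<in> strict_contact theta0" and c3: "c $ 3 = 0"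
  shows "lie1 (\<lambda>p. X p + c) theta0 = lie1 X theta0"
proof -
  have s: "smooth3 (\<lambda>q. X q $ i)" for i using sc_smooth[OF X] by auto
  have e: "(\<lambda>q. (X q + c) $ i) = (\<lambda>q. X q $ i + c $ i)" for i by simp
  have "pd i (\<lambda>q. (X q + c) $ j) = pd i (\<lambda>q. X q $ j)" for i j
    unfolding e using s by (simp add: pd_add_f smooth3_const pd_const_f)
  then show ?thesis unfolding lie1_def using c3 by (auto simp: vec_eq_iff sum_3 pd_th12)
qed

lemma sc_shift:
  assumes X: "X \<in> strict_contact theta0"
  shows "(\<lambda>p. X p - a *\<^sub>R dX p - b *\<^sub>R dY p) \<in> strict_contact theta0"
proof -
  have e: "(\<lambda>p. X p - a *\<^sub>R dX p - b *\<^sub>R dY p) = (\<lambda>p. X p + (- a *\<^sub>R axis 1 1 - b *\<^sub>R axis 2 1))"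
    by (auto simp: dX_def dY_def)
  have t: "tvec (\<lambda>p. X p + (- a *\<^sub>R axis 1 1 - b *\<^sub>R axis 2 1))"
    using X unfolding tvec_def strict_contact_def by (auto intro!: tfun_add tfun_const)
  show ?thesis unfolding e strict_contact_def using t lie1_shift[OF X, of "- a *\<^sub>R axis 1 1 - b *\<^sub>R axis 2 1"] X
    by (auto simp: axis_def strict_contact_def)
qed


definition "fsX X q = hf X q * sin (q $ 3)"
definition "fcX X q = hf X q * cos (q $ 3)"
definition "Phi X = Ik 3 (fsX X)"
definition "Psi X = Ik 3 (fcX X)"
definition "phi X q = Phi X (updv 3 (2*pi) q)"
definition "psi X q = Psi X (updv 3 (2*pi) q)"
definition "phi0 X q = phi X (updv 2 0 q)"

abbreviation "a1 \<equiv> axis 1 (2*pi) :: real^3"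
abbreviation "a2 \<equiv> axis 2 (2*pi) :: real^3"
abbreviation "a3 \<equiv> axis 3 (2*pi) :: real^3"

lemma Ik_neg: "smooth3 f \<Longrightarrow> Ik k (\<lambda>q. - f q) p = - Ik k f p"
  using Ik_lin[of f f k "-1" 0 p] by simp

lemma Ik_zero_fun: "Ik k (\<lambda>q. 0) p = 0"
  using Ik_const[of k 0 p] by simp

lemma per_of_tfun: "tfun g \<Longrightarrow> g (q + axis j (2*pi)) = g q"
  unfolding tfun_def periodic3_def by blast

context
  fixes X assumes X: "X \<in> strict_contact theta0"
begin

lemma sm_f: "smooth3 (hf X)" using smooth_hf[OF X] .
lemma tf_fs: "tfun (fsX X)" unfolding fsX_def[abs_def] by (intro tfun_mult tfun_hf[OF X] tfun_sin3)
lemma tf_fc: "tfun (fcX X)" unfolding fcX_def[abs_def] by (intro tfun_mult tfun_hf[OF X] tfun_cos3)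
lemma sm_fs: "smooth3 (fsX X)" using tf_fs tfun_def by blast
lemma sm_fc: "smooth3 (fcX X)" using tf_fc tfun_def by blast
lemma sm_Phi: "smooth3 (Phi X)" unfolding Phi_def by (intro smooth3_Ik sm_fs)
lemma sm_Psi: "smooth3 (Psi X)" unfolding Psi_def by (intro smooth3_Ik sm_fc)
lemma sm_phi: "smooth3 (phi X)" unfolding phi_def[abs_def] by (intro smooth3_updv sm_Phi)
lemma sm_psi: "smooth3 (psi X)" unfolding psi_def[abs_def] by (intro smooth3_updv sm_Psi)
lemma sm_phi0: "smooth3 (phi0 X)" unfolding phi0_def[abs_def] by (intro smooth3_updv sm_phi)

lemma Phi_per12: "j \<noteq> 3 \<Longrightarrow> Phi X (q + axis j (2*pi)) = Phi X q"
  unfolding Phi_def by (rule Ik_transl) (auto simp: axis_nth_other per_of_tfun[OF tf_fs])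
lemma Psi_per12: "j \<noteq> 3 \<Longrightarrow> Psi X (q + axis j (2*pi)) = Psi X q"
  unfolding Psi_def by (rule Ik_transl) (auto simp: axis_nth_other per_of_tfun[OF tf_fc])
lemma Phi_per3: "Phi X (q + a3) = Phi X q + phi X q"
  unfolding Phi_def phi_def by (rule Ik_period[OF sm_fs per_of_tfun[OF tf_fs]])
lemma Psi_per3: "Psi X (q + a3) = Psi X q + psi X q"
  unfolding Psi_def psi_def by (rule Ik_period[OF sm_fc per_of_tfun[OF tf_fc]])

lemma phi_per: "phi X (q + axis j (2*pi)) = phi X q"
  by (cases "j = 3") (auto simp: phi_def updv_transl_same updv_transl_other Phi_per12)
lemma psi_per: "psi X (q + axis j (2*pi)) = psi X q"
  by (cases "j = 3") (auto simp: psi_def updv_transl_same updv_transl_other Psi_per12)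
lemma phi_inv3: "phi X (updv 3 c q) = phi X q" by (simp add: phi_def)
lemma psi_inv3: "psi X (updv 3 c q) = psi X q" by (simp add: psi_def)
lemma phi0_per: "phi0 X (q + axis j (2*pi)) = phi0 X q"
  by (cases "j = 2") (auto simp: phi0_def updv_transl_same updv_transl_other phi_per)
lemma phi0_inv2: "phi0 X (updv 2 c q) = phi0 X q" by (simp add: phi0_def)
lemma phi0_inv3: "phi0 X (updv 3 c q) = phi0 X q"
  by (simp add: phi0_def updv_comm[of 2 3] phi_inv3)

lemma pd_Phi: "pd i (Phi X) = (if i = 3 then fsX X else Ik 3 (pd i (fsX X)))"
  unfolding Phi_def by (simp add: pd_Ik_f sm_fs)
lemma pd_Psi: "pd i (Psi X) = (if i = 3 then fcX X else Ik 3 (pd i (fcX X)))"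
  unfolding Psi_def by (simp add: pd_Ik_f sm_fc)
lemma pd_phi: "pd i (phi X) q = (if i = 3 then 0 else pd i (Phi X) (updv 3 (2*pi) q))"
  unfolding phi_def[abs_def] by (simp add: pd_updv_f sm_Phi)
lemma pd_psi: "pd i (psi X) q = (if i = 3 then 0 else pd i (Psi X) (updv 3 (2*pi) q))"
  unfolding psi_def[abs_def] by (simp add: pd_updv_f sm_Psi)

lemma key0: "pd 1 (fcX X) q + pd 2 (fsX X) q = 0"
proof -
  have "pd 1 (fcX X) q + pd 2 (fsX X) q = cos (q $ 3) * pd 1 (hf X) q + sin (q $ 3) * pd 2 (hf X) q"
    unfolding fcX_def[abs_def] fsX_def[abs_def]
    by (simp add: pd_mult_f sm_f smooth3_cos3 smooth3_sin3 pd_cos3_f pd_sin3_f)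
  then show ?thesis using X_hf(4)[OF X] by simp
qed

lemma key1: "pd 1 (Psi X) q + pd 2 (Phi X) q = 0"
proof -
  have e: "(\<lambda>q. 1 * pd 1 (fcX X) q + 1 * pd 2 (fsX X) q) = (\<lambda>q. 0)" using key0 by simp
  have "pd 1 (Psi X) q + pd 2 (Phi X) q = Ik 3 (pd 1 (fcX X)) q + Ik 3 (pd 2 (fsX X)) q"
    by (simp add: pd_Psi pd_Phi)
  also have "\<dots> = Ik 3 (\<lambda>q. 1 * pd 1 (fcX X) q + 1 * pd 2 (fsX X) q) q"
    using Ik_lin[OF smooth3_pd[OF sm_fc] smooth3_pd[OF sm_fs], where k=3 and a=1 and b=1 and p=q] by simp
  also have "\<dots> = 0" unfolding e by (rule Ik_zero_fun)
  finally show ?thesis .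
qed

lemma key2: "pd 1 (psi X) q + pd 2 (phi X) q = 0"
  using key1[of "updv 3 (2*pi) q"] by (simp add: pd_phi pd_psi)

lemma key2f: "pd 1 (psi X) = (\<lambda>q. - pd 2 (phi X) q)"
  using key2 by (auto simp: algebra_simps eq_neg_iff_add_eq_0)

end


definition "Fc X q = - Phi X q + q $ 3 * phi X q / (2*pi)"
definition "Gc X q = Psi X q - q $ 3 * psi X q / (2*pi)"
definition "Hc X a b q = Ik 1 (phi0 X) q / (2*pi) - b / 2 * q $ 1 - Ik 2 (psi X) q / (2*pi) + a / 2 * q $ 2"
definition "aX X = Ik 2 (psi X) (updv 2 (2*pi) 0) / (2*pi^2)"
definition "bX X = Ik 1 (phi0 X) (updv 1 (2*pi) 0) / (2*pi^2)"

context
  fixes X assumes X: "X \<in> strict_contact theta0"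
begin

lemma sm_Fc: "smooth3 (Fc X)"
  unfolding Fc_def[abs_def] divide_inverse
  by (intro smooth3_add smooth3_minus smooth3_mult smooth3_coord smooth3_const sm_Phi[OF X] sm_phi[OF X])
lemma sm_Gc: "smooth3 (Gc X)"
  unfolding Gc_def[abs_def] divide_inverse
  by (intro smooth3_diff smooth3_mult smooth3_coord smooth3_const sm_Psi[OF X] sm_psi[OF X])
lemma sm_Hc: "smooth3 (Hc X a b)"
  unfolding Hc_def[abs_def] divide_inverse
  by (intro smooth3_add smooth3_diff smooth3_mult smooth3_coord smooth3_const smooth3_Ik sm_psi[OF X] sm_phi0[OF X])

lemma Fc_per: "Fc X (q + axis j (2*pi)) = Fc X q"
proof (cases "j = 3")
  case True
  then show ?thesis unfolding Fc_def using Phi_per3[OF X, of q] phi_per[OF X, of q 3]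
    by (simp add: field_simps)
next
  case False
  then show ?thesis unfolding Fc_def using Phi_per12[OF X False] phi_per[OF X, of q j]
    by (simp add: axis_nth_other)
qed

lemma Gc_per: "Gc X (q + axis j (2*pi)) = Gc X q"
proof (cases "j = 3")
  case True
  then show ?thesis unfolding Gc_def using Psi_per3[OF X, of q] psi_per[OF X, of q 3]
    by (simp add: field_simps)
next
  case False
  then show ?thesis unfolding Gc_def using Psi_per12[OF X False] psi_per[OF X, of q j]
    by (simp add: axis_nth_other)
qed

lemma bX_indep: "Ik 1 (phi0 X) (updv 1 (2*pi) q) = Ik 1 (phi0 X) (updv 1 (2*pi) 0)"
proof -
  have e: "updv 1 (2*pi) q = updv 2 (q $ 2) (updv 3 (q $ 3) (updv 1 (2*pi) 0))" by (auto simp: vec_eq_iff forall_3)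
  have i2: "Ik 1 (phi0 X) (updv 2 c p) = Ik 1 (phi0 X) p" for c p
    by (rule Ik_indep) (auto simp: phi0_inv2[OF X])
  have i3: "Ik 1 (phi0 X) (updv 3 c p) = Ik 1 (phi0 X) p" for c p
    by (rule Ik_indep) (auto simp: phi0_inv3[OF X])
  show ?thesis unfolding e i2 i3 ..
qed

lemma aX_indep: "Ik 2 (psi X) (updv 2 (2*pi) q) = Ik 2 (psi X) (updv 2 (2*pi) 0)"
proof -
  define Q where "Q q = Ik 2 (psi X) (updv 2 (2*pi) q)" for q
  have sQ: "smooth3 Q" unfolding Q_def[abs_def] by (intro smooth3_updv smooth3_Ik sm_psi[OF X])
  have pdQ: "pd 1 Q p = 0" for p
  proof -
    let ?u = "updv 2 (2*pi) p"
    have "pd 1 Q p = pd 1 (Ik 2 (psi X)) ?u"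
      unfolding Q_def[abs_def] by (simp add: pd_updv_f smooth3_Ik sm_psi[OF X])
    also have "\<dots> = Ik 2 (pd 1 (psi X)) ?u" by (simp add: pd_Ik_f sm_psi[OF X])
    also have "\<dots> = - Ik 2 (pd 2 (phi X)) ?u"
      unfolding key2f[OF X] by (rule Ik_neg) (intro smooth3_pd sm_phi[OF X])
    also have "\<dots> = - (phi X ?u - phi X (updv 2 0 ?u))" using FTC_Ik[OF sm_phi[OF X]] by simp
    also have "phi X ?u = phi X (updv 2 0 ?u + a2)"
      by (rule arg_cong[where f="phi X"]) (auto simp: vec_eq_iff axis_def forall_3)
    also have "\<dots> = phi X (updv 2 0 ?u)" by (rule phi_per[OF X])
    finally show ?thesis by simp
  qed
  have i3: "Q (updv 3 c p) = Q p" for c p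
    unfolding Q_def updv_comm[of 2 3, simplified]
    by (rule Ik_indep) (auto simp: psi_inv3[OF X])
  have "Q q = Q (updv 3 (q $ 3) (updv 1 (q $ 1) 0))"
    unfolding Q_def by (rule arg_cong[where f="Ik 2 (psi X)"]) (auto simp: vec_eq_iff forall_3)
  also have "\<dots> = Q (updv 1 (q $ 1) 0)" by (rule i3)
  also have "\<dots> = Q (updv 1 0 0)" by (rule const_line[OF smooth3_D[OF sQ] pdQ])
  also have "updv 1 0 0 = (0::real^3)" by (auto simp: vec_eq_iff forall_3)
  finally show ?thesis unfolding Q_def by simp
qed

lemma Hc_per: "Hc X (aX X) (bX X) (q + axis j (2*pi)) = Hc X (aX X) (bX X) q"
proof -
  have p1: "Ik 1 (phi0 X) (q + a1) = Ik 1 (phi0 X) q + Ik 1 (phi0 X) (updv 1 (2*pi) q)"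
    by (rule Ik_period[OF sm_phi0[OF X] phi0_per[OF X]])
  have p2: "Ik 2 (psi X) (q + a2) = Ik 2 (psi X) q + Ik 2 (psi X) (updv 2 (2*pi) q)"
    by (rule Ik_period[OF sm_psi[OF X] psi_per[OF X]])
  have t1: "Ik 1 (phi0 X) (q + axis j (2*pi)) = Ik 1 (phi0 X) q" if "j \<noteq> 1" for j
    by (rule Ik_transl) (use that in \<open>auto simp: axis_nth_other phi0_per[OF X]\<close>)
  have t2: "Ik 2 (psi X) (q + axis j (2*pi)) = Ik 2 (psi X) q" if "j \<noteq> 2" for j
    by (rule Ik_transl) (use that in \<open>auto simp: axis_nth_other psi_per[OF X]\<close>)
  show ?thesis
  proof (cases j rule: cases3)
    case 1
    then show ?thesis unfolding Hc_def using p1 t2[of 1] bX_indep[of q]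
      by (simp add: bX_def axis_def field_simps power2_eq_square)
  next
    case 2
    then show ?thesis unfolding Hc_def using p2 t1[of 2] aX_indep[of q]
      by (simp add: aX_def axis_def field_simps power2_eq_square)
  next
    case 3
    then show ?thesis unfolding Hc_def using t1[of 3] t2[of 3]
      by (simp add: axis_def)
  qed
qed

end


lemma smooth3_divc: "smooth3 f \<Longrightarrow> smooth3 (\<lambda>q. f q / c)"
  using smooth3_cmult[of f "inverse c"] by (simp add: divide_inverse mult.commute)
lemma pd_divc_f: "smooth3 f \<Longrightarrow> pd i (\<lambda>q. f q / c) = (\<lambda>q. pd i f q / c)"
  using pd_cmult_f[of f i "inverse c"] by (simp add: divide_inverse mult.commute)

definition "alpha X q = (vector [-(1/2) * hf X q * cos (q $ 3) + Fc X q, -(1/2) * hf X q * sin (q $ 3) + Gc X q, Hc X (aX X) (bX X) q] :: real^3)"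

lemma alpha_c: "(\<lambda>q. alpha X q $ 1) = (\<lambda>q. -(1/2) * hf X q * cos (q $ 3) + Fc X q)"
  "(\<lambda>q. alpha X q $ 2) = (\<lambda>q. -(1/2) * hf X q * sin (q $ 3) + Gc X q)"
  "(\<lambda>q. alpha X q $ 3) = Hc X (aX X) (bX X)"
  by (auto simp: alpha_def)

context
  fixes X assumes X: "X \<in> strict_contact theta0"
begin

lemma tvec_alpha: "tvec (alpha X)"
proof -
  have tF: "tfun (Fc X)" unfolding tfun_def periodic3_def using sm_Fc[OF X] Fc_per[OF X] by blast
  have tG: "tfun (Gc X)" unfolding tfun_def periodic3_def using sm_Gc[OF X] Gc_per[OF X] by blast
  have tH: "tfun (Hc X (aX X) (bX X))" unfolding tfun_def periodic3_def using sm_Hc[OF X] Hc_per[OF X] by blast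
  show ?thesis unfolding tvec_def forall_3 alpha_c
    using tF tG tH by (intro conjI tfun_add tfun_mult tfun_cmult tfun_hf[OF X] tfun_cos3 tfun_sin3)
qed

lemmas sms = sm_f[OF X] sm_Fc[OF X] sm_Gc[OF X] sm_Hc[OF X] sm_Phi[OF X] sm_Psi[OF X] sm_phi[OF X] sm_psi[OF X] sm_phi0[OF X]
  smooth3_cos3 smooth3_sin3 smooth3_coord smooth3_const

lemma L1: "pd 1 (\<lambda>q. alpha X q $ 2) p = -(1/2) * (pd 1 (hf X) p * sin (p $ 3)) + pd 1 (Psi X) p - p $ 3 * pd 1 (psi X) p / (2*pi)"
  unfolding alpha_c Gc_def[abs_def]
  by (simp add: sms smooth3_mult smooth3_divc smooth3_diff pd_divc_f pd_mult_f pd_coord_f pd_diff_f pd_sin3_f)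

lemma L2: "pd 2 (\<lambda>q. alpha X q $ 1) p = -(1/2) * (pd 2 (hf X) p * cos (p $ 3)) - pd 2 (Phi X) p + p $ 3 * pd 2 (phi X) p / (2*pi)"
  unfolding alpha_c Fc_def[abs_def]
  by (simp add: sms smooth3_mult smooth3_divc smooth3_diff smooth3_add smooth3_minus pd_divc_f pd_mult_f pd_diff_f pd_add_f pd_minus_f pd_const_f pd_cos3_f pd_coord_f)

lemma L3: "pd 3 (\<lambda>q. alpha X q $ 1) p = -(1/2) * (pd 3 (hf X) p * cos (p $ 3) - hf X p * sin (p $ 3)) - fsX X p + phi X p / (2*pi)"
  unfolding alpha_c Fc_def[abs_def]
  by (simp add: sms smooth3_mult smooth3_divc smooth3_diff smooth3_add smooth3_minus pd_divc_f pd_mult_f pd_diff_f pd_add_f pd_minus_f pd_const_f pd_cos3_f pd_coord_f pd_Phi[OF X] pd_phi[OF X])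

lemma L4: "pd 3 (\<lambda>q. alpha X q $ 2) p = -(1/2) * (pd 3 (hf X) p * sin (p $ 3) + hf X p * cos (p $ 3)) + fcX X p - psi X p / (2*pi)"
  unfolding alpha_c Gc_def[abs_def]
  by (simp add: sms smooth3_mult smooth3_divc smooth3_diff smooth3_add smooth3_minus pd_divc_f pd_mult_f pd_diff_f pd_add_f pd_minus_f pd_const_f pd_sin3_f pd_coord_f pd_Psi[OF X] pd_psi[OF X])

lemma L5: "pd 1 (\<lambda>q. alpha X q $ 3) p = phi X p / (2*pi) - bX X / 2"
proof -
  have a: "pd 1 (\<lambda>q. alpha X q $ 3) p = phi0 X p / (2*pi) - bX X / 2 - Ik 2 (pd 1 (psi X)) p / (2*pi)"
    unfolding alpha_c Hc_def[abs_def]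
    by (simp add: sms smooth3_mult smooth3_divc smooth3_diff smooth3_add smooth3_minus pd_divc_f pd_mult_f pd_diff_f pd_add_f pd_minus_f pd_const_f smooth3_Ik pd_coord_f pd_Ik_f)
  have "Ik 2 (pd 1 (psi X)) p = - (phi X p - phi0 X p)"
    unfolding key2f[OF X] Ik_neg[OF smooth3_pd[OF sm_phi[OF X]]] FTC_Ik[OF sm_phi[OF X]] phi0_def ..
  with a have "pd 1 (\<lambda>q. alpha X q $ 3) p = phi0 X p / (2*pi) - bX X / 2 + (phi X p - phi0 X p) / (2*pi)" by (simp add: diff_divide_distrib)
  then show ?thesis by (simp add: diff_divide_distrib)
qed

lemma L6: "pd 2 (\<lambda>q. alpha X q $ 3) p = - psi X p / (2*pi) + aX X / 2"
proof -
  have z: "pd 2 (phi0 X) = (\<lambda>q. 0)" unfolding phi0_def[abs_def] by (simp add: pd_updv_f sms)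
  show ?thesis
    unfolding alpha_c Hc_def[abs_def]
    by (simp add: sms smooth3_mult smooth3_divc smooth3_diff smooth3_add smooth3_minus pd_divc_f pd_mult_f pd_diff_f pd_add_f pd_minus_f pd_const_f smooth3_Ik pd_coord_f pd_Ik_f z Ik_zero_fun)
qed

end


context
  fixes X assumes X: "X \<in> strict_contact theta0"
begin

lemma d1_alpha: "d1 (alpha X) = interior3 (\<lambda>p. X p - aX X *\<^sub>R dX p - bX X *\<^sub>R dY p) (mu theta0)"
proof (rule ext, rule mat3_eq[OF d1_anti interior3_anti])
  fix p
  have k1: "pd 1 (Psi X) p = - pd 2 (Phi X) p" using key1[OF X, of p] by (simp add: eq_neg_iff_add_eq_0)
  have k2: "pd 1 (psi X) p = - pd 2 (phi X) p" using key2[OF X, of p] by (simp add: eq_neg_iff_add_eq_0)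
  have V: "(X p - aX X *\<^sub>R dX p - bX X *\<^sub>R dY p) $ 1 = X p $ 1 - aX X"
     "(X p - aX X *\<^sub>R dX p - bX X *\<^sub>R dY p) $ 2 = X p $ 2 - bX X"
     "(X p - aX X *\<^sub>R dX p - bX X *\<^sub>R dY p) $ 3 = X p $ 3"
    by (simp_all add: dX_def dY_def axis_def)
  show "d1 (alpha X) p $ 1 $ 2 = interior3 (\<lambda>p. X p - aX X *\<^sub>R dX p - bX X *\<^sub>R dY p) (mu theta0) p $ 1 $ 2"
    unfolding interior3_eq V mu_theta0 d1_def
    by (simp add: L1[OF X] L2[OF X] k1 k2 X_hf(3)[OF X] algebra_simps)
  show "d1 (alpha X) p $ 1 $ 3 = interior3 (\<lambda>p. X p - aX X *\<^sub>R dX p - bX X *\<^sub>R dY p) (mu theta0) p $ 1 $ 3"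
    unfolding interior3_eq V mu_theta0 d1_def
    by (simp add: L5[OF X] L3[OF X] X_hf(2)[OF X] fsX_def algebra_simps)
  show "d1 (alpha X) p $ 2 $ 3 = interior3 (\<lambda>p. X p - aX X *\<^sub>R dX p - bX X *\<^sub>R dY p) (mu theta0) p $ 2 $ 3"
    unfolding interior3_eq V mu_theta0 d1_def
    by (simp add: L6[OF X] L4[OF X] X_hf(1)[OF X] fcX_def algebra_simps)
qed

lemma claim4_exist: "(\<lambda>p. X p - aX X *\<^sub>R dX p - bX X *\<^sub>R dY p) \<in> exact_strict_contact theta0"
  unfolding exact_strict_contact_def exact2_def using sc_shift[OF X] tvec_alpha[OF X] d1_alpha by blast

end


lemma Ik_coord: "j \<noteq> k \<Longrightarrow> Ik k (\<lambda>q. c * q $ j) p = c * p $ j * p $ k"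
  by (simp add: Ik_def Jm_def)

lemma flux_zero:
  assumes u: "tfun u" and w: "tfun w" and jk: "j \<noteq> k"
    and h: "\<And>p. pd j u p - pd k w p = c"
  shows "c = 0"
proof -
  have su: "smooth3 u" and sw: "smooth3 w" using u w tfun_def by auto
  define ps :: "real^3" where "ps = updv j (2*pi) (updv k (2*pi) 0)"
  have psj: "ps $ j = 2*pi" and psk: "ps $ k = 2*pi" using jk by (auto simp: ps_def)
  have e1: "(\<lambda>q. 1 * pd j u q + (-1) * pd k w q) = (\<lambda>q. c)" using h by simp
  have "Ik j (\<lambda>q. c) q = 1 * Ik j (pd j u) q + (-1) * Ik j (pd k w) q" for q
    unfolding e1[symmetric] by (rule Ik_lin) (auto intro: smooth3_pd su sw)
  then have e2: "(\<lambda>q. c * q $ j) = (\<lambda>q. 1 * (u q - u (updv j 0 q)) + (-1) * pd k (Ik j w) q)"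
    using jk by (auto simp: Ik_const FTC_Ik[OF su] pd_Ik_other[OF sw] mult.commute)
  have sm1: "smooth3 (\<lambda>q. u q - u (updv j 0 q))" using su by (intro smooth3_diff smooth3_updv)
  have sm2: "smooth3 (pd k (Ik j w))" using sw by (intro smooth3_pd smooth3_Ik)
  have "c * ps $ j * ps $ k = Ik k (\<lambda>q. c * q $ j) ps" using Ik_coord[OF jk] by simp
  also have "\<dots> = 1 * Ik k (\<lambda>q. u q - u (updv j 0 q)) ps + (-1) * Ik k (pd k (Ik j w)) ps"
    unfolding e2 by (rule Ik_lin[OF sm1 sm2])
  also have "Ik k (\<lambda>q. u q - u (updv j 0 q)) ps = 1 * Ik k u ps + (-1) * Ik k (\<lambda>q. u (updv j 0 q)) ps"
    using Ik_lin[OF su smooth3_updv[OF su], where k=k and a=1 and b="-1" and p=ps] by simp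
  also have "Ik k (\<lambda>q. u (updv j 0 q)) ps = Ik k u (updv j 0 ps)" using Ik_updv jk by blast
  also have "Ik k u (updv j 0 ps) = Ik k u (updv j 0 ps + axis j (2*pi))"
    by (rule Ik_transl[symmetric]) (use jk u in \<open>auto simp: axis_nth_other per_of_tfun\<close>)
  also have "updv j 0 ps + axis j (2*pi) = ps" using psj by (auto simp: vec_eq_iff axis_def)
  also have "Ik k (pd k (Ik j w)) ps = Ik j w ps - Ik j w (updv k 0 ps)"
    by (rule FTC_Ik) (intro smooth3_Ik sw)
  also have "Ik j w (updv k 0 ps) = Ik j w (updv k 0 ps + axis k (2*pi))"
    by (rule Ik_transl[symmetric]) (use jk w in \<open>auto simp: axis_nth_other per_of_tfun\<close>)
  also have "updv k 0 ps + axis k (2*pi) = ps" using psk by (auto simp: vec_eq_iff axis_def)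
  finally have "c * (2*pi) * (2*pi) = 0" using psj psk by simp
  then show ?thesis by simp
qed

lemma tfun_nth: "tvec a \<Longrightarrow> tfun (\<lambda>q. a q $ i)" by (simp add: tvec_def)

lemma claim7:
  assumes "exact2 (\<lambda>p. a *\<^sub>R basic2 2 3 p + b *\<^sub>R basic2 1 3 p)"
  shows "a = 0 \<and> b = 0"
proof -
  obtain al where al: "tvec al" "d1 al = (\<lambda>p. a *\<^sub>R basic2 2 3 p + b *\<^sub>R basic2 1 3 p)"
    using assms exact2_def by blast
  have "d1 al p $ 2 $ 3 = a" "d1 al p $ 1 $ 3 = b" for p
    using al(2) by (simp_all add: basic2_def)
  then have h1: "pd 2 (\<lambda>q. al q $ 3) p - pd 3 (\<lambda>q. al q $ 2) p = a"
    and h2: "pd 1 (\<lambda>q. al q $ 3) p - pd 3 (\<lambda>q. al q $ 1) p = b" for p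
    by (simp_all add: d1_def)
  show ?thesis using flux_zero[OF tfun_nth[OF al(1)] tfun_nth[OF al(1)] _ h1]
    flux_zero[OF tfun_nth[OF al(1)] tfun_nth[OF al(1)] _ h2] by simp
qed


lemma Vnth: "(X p - a *\<^sub>R dX p - b *\<^sub>R dY p) $ 1 = X p $ 1 - a"
     "(X p - a *\<^sub>R dX p - b *\<^sub>R dY p) $ 2 = X p $ 2 - b"
     "(X p - a *\<^sub>R dX p - b *\<^sub>R dY p) $ 3 = X p $ 3"
    by (simp_all add: dX_def dY_def axis_def)

lemma claim4_unique:
  assumes "(\<lambda>p. X p - a *\<^sub>R dX p - b *\<^sub>R dY p) \<in> exact_strict_contact theta0"
    "(\<lambda>p. X p - a' *\<^sub>R dX p - b' *\<^sub>R dY p) \<in> exact_strict_contact theta0"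
  shows "a = a' \<and> b = b'"
proof -
  obtain al where al: "tvec al" "d1 al = interior3 (\<lambda>p. X p - a *\<^sub>R dX p - b *\<^sub>R dY p) (mu theta0)"
    using assms(1) unfolding exact_strict_contact_def exact2_def by blast
  obtain be where be: "tvec be" "d1 be = interior3 (\<lambda>p. X p - a' *\<^sub>R dX p - b' *\<^sub>R dY p) (mu theta0)"
    using assms(2) unfolding exact_strict_contact_def exact2_def by blast
  have sa: "smooth3 (\<lambda>q. al q $ i)" "smooth3 (\<lambda>q. be q $ i)" for i
    using al(1) be(1) by (auto simp: tvec_def tfun_def)
  have tu: "tfun (\<lambda>q. al q $ i - be q $ i)" for i using al(1) be(1) by (intro tfun_diff tfun_nth)
  have h1: "pd 2 (\<lambda>q. al q $ 3 - be q $ 3) p - pd 3 (\<lambda>q. al q $ 2 - be q $ 2) p = (a - a') / 2" for p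
  proof -
    have "d1 al p $ 2 $ 3 - d1 be p $ 2 $ 3 = (a - a') / 2"
      unfolding al(2) be(2) by (simp add: interior3_eq Vnth dX_def dY_def axis_def mu_theta0 algebra_simps)
    then show ?thesis using sa by (simp add: d1_def pd_diff_f)
  qed
  have h2: "pd 1 (\<lambda>q. al q $ 3 - be q $ 3) p - pd 3 (\<lambda>q. al q $ 1 - be q $ 1) p = (b' - b) / 2" for p
  proof -
    have "d1 al p $ 1 $ 3 - d1 be p $ 1 $ 3 = (b' - b) / 2"
      unfolding al(2) be(2) by (simp add: interior3_eq Vnth dX_def dY_def axis_def mu_theta0 algebra_simps)
    then show ?thesis using sa by (simp add: d1_def pd_diff_f)
  qed
  show ?thesis using flux_zero[OF tu tu _ h1] flux_zero[OF tu tu _ h2] by simp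
qed

lemma claim4: "\<forall>X \<in> strict_contact theta0. \<exists>!(a, b). (\<lambda>p. X p - a *\<^sub>R dX p - b *\<^sub>R dY p) \<in> exact_strict_contact theta0"
proof
  fix X assume X: "X \<in> strict_contact theta0"
  show "\<exists>!(a, b). (\<lambda>p. X p - a *\<^sub>R dX p - b *\<^sub>R dY p) \<in> exact_strict_contact theta0"
  proof (rule ex1I[where a="(aX X, bX X)"])
    show "case (aX X, bX X) of (a, b) \<Rightarrow> (\<lambda>p. X p - a *\<^sub>R dX p - b *\<^sub>R dY p) \<in> exact_strict_contact theta0"
      using claim4_exist[OF X] by simp
  next
    fix y assume "case y of (a, b) \<Rightarrow> (\<lambda>p. X p - a *\<^sub>R dX p - b *\<^sub>R dY p) \<in> exact_strict_contact theta0"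
    then show "y = (aX X, bX X)" using claim4_unique claim4_exist[OF X] by (cases y) auto
  qed
qed

lemma claim_flux: "\<forall>X \<in> strict_contact theta0. \<exists>a b. exact2 (\<lambda>p. interior3 X (mu theta0) p - a *\<^sub>R basic2 2 3 p - b *\<^sub>R basic2 1 3 p)"
proof
  fix X assume X: "X \<in> strict_contact theta0"
  have "exact2 (interior3 (\<lambda>p. X p - aX X *\<^sub>R dX p - bX X *\<^sub>R dY p) (mu theta0))"
    using claim4_exist[OF X] unfolding exact_strict_contact_def by blast
  moreover have "interior3 (\<lambda>p. X p - aX X *\<^sub>R dX p - bX X *\<^sub>R dY p) (mu theta0) =
      (\<lambda>p. interior3 X (mu theta0) p - (- aX X / 2) *\<^sub>R basic2 2 3 p - (bX X / 2) *\<^sub>R basic2 1 3 p)"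
    by (rule ext) (simp add: vec_eq_iff forall_3 interior3_eq Vnth dX_def dY_def axis_def mu_theta0 basic2_def algebra_simps)
  ultimately have "exact2 (\<lambda>p. interior3 X (mu theta0) p - (- aX X / 2) *\<^sub>R basic2 2 3 p - (bX X / 2) *\<^sub>R basic2 1 3 p)"
    by (simp only:)
  then show "\<exists>a b. exact2 (\<lambda>p. interior3 X (mu theta0) p - a *\<^sub>R basic2 2 3 p - b *\<^sub>R basic2 1 3 p)"
    by blast
qed

lemma claim6: "\<forall>a b. \<exists>X \<in> strict_contact theta0. exact2 (\<lambda>p. interior3 X (mu theta0) p - a *\<^sub>R basic2 2 3 p - b *\<^sub>R basic2 1 3 p)"
proof (intro allI)
  fix a b :: real
  define v :: "real^3" where "v = vector [-2 * a, 2 * b, 0]"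
  have sc: "(\<lambda>p. v) \<in> strict_contact theta0"
    unfolding strict_contact_def using tvec_const by (auto simp: vec_eq_iff lie1_const v_def)
  have "(\<lambda>p. interior3 (\<lambda>p. v) (mu theta0) p - a *\<^sub>R basic2 2 3 p - b *\<^sub>R basic2 1 3 p) = d1 (\<lambda>p. 0)"
    by (rule ext) (simp add: vec_eq_iff forall_3 interior3_eq mu_theta0 basic2_def v_def d1_def pd_const)
  then have "exact2 (\<lambda>p. interior3 (\<lambda>p. v) (mu theta0) p - a *\<^sub>R basic2 2 3 p - b *\<^sub>R basic2 1 3 p)"
    unfolding exact2_def using tvec_const by metis
  then show "\<exists>X \<in> strict_contact theta0. exact2 (\<lambda>p. interior3 X (mu theta0) p - a *\<^sub>R basic2 2 3 p - b *\<^sub>R basic2 1 3 p)"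
    using sc by blast
qed


definition "divg X q = pd 1 (\<lambda>q. X q $ 1) q + pd 2 (\<lambda>q. X q $ 2) q + pd 3 (\<lambda>q. X q $ 3) q"

lemma div_sc:
  assumes X: "X \<in> strict_contact theta0"
  shows "divg X p = 0"
proof -
  let ?f = "hf X"
  have sf: "smooth3 ?f" using sm_f[OF X] .
  have sfs: "smooth3 (pd i ?f)" "smooth3 (pd i (pd j ?f))" for i j using sf by (auto intro: smooth3_pd)
  have e1: "(\<lambda>q. X q $ 1) = (\<lambda>q. cos (q $ 3) * ?f q - sin (q $ 3) * pd 3 ?f q)" using X_hf(1)[OF X] by auto
  have e2: "(\<lambda>q. X q $ 2) = (\<lambda>q. sin (q $ 3) * ?f q + cos (q $ 3) * pd 3 ?f q)" using X_hf(2)[OF X] by auto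
  have e3: "(\<lambda>q. X q $ 3) = (\<lambda>q. sin (q $ 3) * pd 1 ?f q - cos (q $ 3) * pd 2 ?f q)" using X_hf(3)[OF X] by auto
  have c1: "pd 1 (pd 3 ?f) = pd 3 (pd 1 ?f)" "pd 2 (pd 3 ?f) = pd 3 (pd 2 ?f)" using clairaut[OF sf] by auto
  have R: "cos (p $ 3) * pd 1 ?f p + sin (p $ 3) * pd 2 ?f p = 0" using X_hf(4)[OF X] .
  have "divg X p = 2 * (cos (p $ 3) * pd 1 ?f p + sin (p $ 3) * pd 2 ?f p)"
    unfolding divg_def e1 e2 e3
    by (simp add: sf sfs smooth3_mult smooth3_diff smooth3_add smooth3_cos3 smooth3_sin3 pd_mult_f pd_diff_f pd_add_f
        pd_cos3_f pd_sin3_f c1 algebra_simps)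
  then show ?thesis using R by simp
qed


lemma LB: "(\<lambda>q. lie_bracket X Y q $ i) = (\<lambda>q. 
    (X q $ 1 * pd 1 (\<lambda>q. Y q $ i) q - Y q $ 1 * pd 1 (\<lambda>q. X q $ i) q) +
    (X q $ 2 * pd 2 (\<lambda>q. Y q $ i) q - Y q $ 2 * pd 2 (\<lambda>q. X q $ i) q) +
    (X q $ 3 * pd 3 (\<lambda>q. Y q $ i) q - Y q $ 3 * pd 3 (\<lambda>q. X q $ i) q))"
  by (simp add: lie_bracket_def sum_3)

definition "cra X Y q = (vector [-(1/2) * (Y q $ 2 * X q $ 3 - Y q $ 3 * X q $ 2),
   -(1/2) * (Y q $ 3 * X q $ 1 - Y q $ 1 * X q $ 3), -(1/2) * (Y q $ 1 * X q $ 2 - Y q $ 2 * X q $ 1)] :: real^3)"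

lemma cra_c: "(\<lambda>q. cra X Y q $ 1) = (\<lambda>q. -(1/2) * (Y q $ 2 * X q $ 3 - Y q $ 3 * X q $ 2))"
  "(\<lambda>q. cra X Y q $ 2) = (\<lambda>q. -(1/2) * (Y q $ 3 * X q $ 1 - Y q $ 1 * X q $ 3))"
  "(\<lambda>q. cra X Y q $ 3) = (\<lambda>q. -(1/2) * (Y q $ 1 * X q $ 2 - Y q $ 2 * X q $ 1))"
  by (auto simp: cra_def)

lemma tvec_cra: "tvec X \<Longrightarrow> tvec Y \<Longrightarrow> tvec (cra X Y)"
  unfolding tvec_def forall_3 cra_c
  by (intro conjI tfun_cmult tfun_diff tfun_mult) auto

lemma d1_cra:
  assumes X: "tvec X" and Y: "tvec Y" and dX0: "\<And>p. divg X p = 0" and dY0: "\<And>p. divg Y p = 0"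
  shows "d1 (cra X Y) = interior3 (lie_bracket X Y) (mu theta0)"
proof (rule ext, rule mat3_eq[OF d1_anti interior3_anti])
  fix p
  have s: "smooth3 (\<lambda>q. X q $ i)" "smooth3 (\<lambda>q. Y q $ i)" for i using X Y by (auto simp: tvec_def tfun_def)
  have dx: "pd 1 (\<lambda>q. X q $ 1) p = - pd 2 (\<lambda>q. X q $ 2) p - pd 3 (\<lambda>q. X q $ 3) p"
    using dX0[of p] by (simp add: divg_def algebra_simps)
  have dy: "pd 1 (\<lambda>q. Y q $ 1) p = - pd 2 (\<lambda>q. Y q $ 2) p - pd 3 (\<lambda>q. Y q $ 3) p"
    using dY0[of p] by (simp add: divg_def algebra_simps)
  show "d1 (cra X Y) p $ 1 $ 2 = interior3 (lie_bracket X Y) (mu theta0) p $ 1 $ 2"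
    unfolding d1_def interior3_eq mu_theta0
    by (simp add: cra_c s smooth3_mult smooth3_diff smooth3_minus smooth3_divc pd_minus_f pd_divc_f pd_diff_f pd_mult_f, simp add: lie_bracket_def sum_3 dx dy field_simps)
  show "d1 (cra X Y) p $ 1 $ 3 = interior3 (lie_bracket X Y) (mu theta0) p $ 1 $ 3"
    unfolding d1_def interior3_eq mu_theta0
    by (simp add: cra_c s smooth3_mult smooth3_diff smooth3_minus smooth3_divc pd_minus_f pd_divc_f pd_diff_f pd_mult_f, simp add: lie_bracket_def sum_3 dx dy field_simps)
  show "d1 (cra X Y) p $ 2 $ 3 = interior3 (lie_bracket X Y) (mu theta0) p $ 2 $ 3"
    unfolding d1_def interior3_eq mu_theta0
    by (simp add: cra_c s smooth3_mult smooth3_diff smooth3_minus smooth3_divc pd_minus_f pd_divc_f pd_diff_f pd_mult_f, simp add: lie_bracket_def sum_3 dx dy field_simps)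
qed


lemma tvec_bracket: "tvec X \<Longrightarrow> tvec Y \<Longrightarrow> tvec (lie_bracket X Y)"
  unfolding tvec_def LB
  by (intro allI tfun_add tfun_diff tfun_mult tfun_pd) auto

lemma lie1_bracket_id:
  assumes X: "tvec X" and Y: "tvec Y"
  shows "lie1 (lie_bracket X Y) theta0 p $ j =
    (\<Sum>k\<in>UNIV. X p $ k * pd k (\<lambda>q. lie1 Y theta0 q $ j) p - Y p $ k * pd k (\<lambda>q. lie1 X theta0 q $ j) p)
    + (\<Sum>i\<in>UNIV. lie1 Y theta0 p $ i * pd j (\<lambda>q. X q $ i) p - lie1 X theta0 p $ i * pd j (\<lambda>q. Y q $ i) p)"
proof -
  have s: "smooth3 (\<lambda>q. X q $ i)" "smooth3 (\<lambda>q. Y q $ i)" for i using X Y by (auto simp: tvec_def tfun_def)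
  have s2: "smooth3 (pd k (\<lambda>q. X q $ i))" "smooth3 (pd k (\<lambda>q. Y q $ i))"
     "smooth3 (pd l (pd k (\<lambda>q. X q $ i)))" "smooth3 (pd l (pd k (\<lambda>q. Y q $ i)))" for i k l
    using s by (auto intro: smooth3_pd)
  have cl: "pd 2 (pd 1 (\<lambda>q. X q $ i)) = pd 1 (pd 2 (\<lambda>q. X q $ i))"
    "pd 3 (pd 1 (\<lambda>q. X q $ i)) = pd 1 (pd 3 (\<lambda>q. X q $ i))"
    "pd 3 (pd 2 (\<lambda>q. X q $ i)) = pd 2 (pd 3 (\<lambda>q. X q $ i))"
    "pd 2 (pd 1 (\<lambda>q. Y q $ i)) = pd 1 (pd 2 (\<lambda>q. Y q $ i))"
    "pd 3 (pd 1 (\<lambda>q. Y q $ i)) = pd 1 (pd 3 (\<lambda>q. Y q $ i))"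
    "pd 3 (pd 2 (\<lambda>q. Y q $ i)) = pd 2 (pd 3 (\<lambda>q. Y q $ i))" for i
    using clairaut s by metis+
  show ?thesis
    unfolding lie1_def LB
    by (cases j rule: cases3;
        simp add: sum_3 s s2 smooth3_mult smooth3_diff smooth3_add smooth3_minus smooth3_cos3 smooth3_sin3 smooth3_const
          pd_add_f pd_diff_f pd_mult_f pd_minus_f pd_const_f pd_cos3_f pd_sin3_f pd_cos3 pd_sin3 pd_const cl;
        simp add: lie_bracket_def sum_3 algebra_simps)
qed


lemma claim5: "\<forall>X \<in> strict_contact theta0. \<forall>Y \<in> exact_strict_contact theta0. lie_bracket X Y \<in> exact_strict_contact theta0"
proof (intro ballI)
  fix X Y assume X: "X \<in> strict_contact theta0" and Ye: "Y \<in> exact_strict_contact theta0"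
  have Y: "Y \<in> strict_contact theta0" using Ye exact_strict_contact_def by blast
  have tX: "tvec X" and tY: "tvec Y" and lX: "lie1 X theta0 = (\<lambda>p. 0)" and lY: "lie1 Y theta0 = (\<lambda>p. 0)"
    using X Y strict_contact_def by auto
  have "lie1 (lie_bracket X Y) theta0 p $ j = 0" for p j
    unfolding lie1_bracket_id[OF tX tY] lX lY by (simp add: pd_const)
  then have "lie1 (lie_bracket X Y) theta0 = (\<lambda>p. 0)" by (auto simp: vec_eq_iff)
  then have sc: "lie_bracket X Y \<in> strict_contact theta0"
    unfolding strict_contact_def using tvec_bracket[OF tX tY] by simp
  have "exact2 (interior3 (lie_bracket X Y) (mu theta0))"
    unfolding exact2_def using tvec_cra[OF tX tY] d1_cra[OF tX tY div_sc[OF X] div_sc[OF Y]] by blast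
  then show "lie_bracket X Y \<in> exact_strict_contact theta0"
    unfolding exact_strict_contact_def using sc by simp
qed

theorem mainTheorem4:
  shows "contact_form theta0 \<and> \<not> regular theta0
    \<and> dX \<in> strict_contact theta0 \<and> dY \<in> strict_contact theta0
    \<and> (\<forall>X \<in> strict_contact theta0. \<exists>!(a, b). (\<lambda>p. X p - a *\<^sub>R dX p - b *\<^sub>R dY p) \<in> exact_strict_contact theta0)
    \<and> (\<forall>X \<in> strict_contact theta0. \<forall>Y \<in> exact_strict_contact theta0. lie_bracket X Y \<in> exact_strict_contact theta0)
    \<and> (\<forall>X \<in> strict_contact theta0. \<exists>a b. exact2 (\<lambda>p. interior3 X (mu theta0) p - a *\<^sub>R basic2 2 3 p - b *\<^sub>R basic2 1 3 p))
    \<and> (\<forall>a b. \<exists>X \<in> strict_contact theta0. exact2 (\<lambda>p. interior3 X (mu theta0) p - a *\<^sub>R basic2 2 3 p - b *\<^sub>R basic2 1 3 p))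
    \<and> (\<forall>a b. exact2 (\<lambda>p. a *\<^sub>R basic2 2 3 p + b *\<^sub>R basic2 1 3 p) \<longrightarrow> a = 0 \<and> b = 0)"
  using contact_theta0 not_regular dX_sc dY_sc claim4 claim5 claim_flux claim6 claim7 by blast


end
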